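(* (1) For each $f\in\mathcal A_C$, the map $\Phi_f:\mathcal{BV}\to C^0(\overline{\mathbb R})$, $\Phi_f[g]=f*g$, is a bounded linear operator (with $\mathcal{BV}$ normed by $\|\cdot\|_{\mathcal{BV}}$ and $C^0(\overline{\mathbb R})$ by $\|\cdot\|_\infty$) with $\|\Phi_f\|\le\|f\|$, and there exists a nonzero $f\in\mathcal A_C$ with $\|\Phi_f\|=\|f\|$. (2) For each $g\in\mathcal{BV}$, the map $\Psi_g:\mathcal A_C\to C^0(\overline{\mathbb R})$, $\Psi_g[f]=f*g$, is a bounded linear operator (with $\mathcal A_C$ normed by the Alexiewicz norm) with $\|\Psi_g\|\le\|g\|_{\mathcal{BV}}$, and there exists a nonzero $g\in\mathcal{BV}$ with $\|\Psi_g\|=\|g\|_{\mathcal{BV}}$.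
   Context: Notation: $\mathcal D=C_c^\infty(\mathbb R)$, $\mathcal D'$ the Schwartz distributions; derivatives of distributions are distributional derivatives. $\overline{\mathbb R}=[-\infty,\infty]$, $F(\pm\infty)=\lim_{x\to\pm\infty}F(x)$. $C^0(\overline{\mathbb R})$ is the set of continuous $F:\mathbb R\to\mathbb R$ with finite limits at $\pm\infty$, normed by $\|F\|_\infty=\sup_{\mathbb R}|F|$. $\mathcal B_C=\{F\in C^0(\overline{\mathbb R}):F(-\infty)=0\}$. $\mathcal A_C=\{f\in\mathcal D': f=F' \text{ for some } F\in\mathcal B_C\}$; the primitive $F\in\mathcal B_C$ is unique, and $\int_a^bf=F(b)-F(a)$ for $a,b\in\overline{\mathbb R}$. The Alexiewicz norm is $\|f\|=\sup_I|\int_If|$ over all intervals $I\subset\mathbb R$. $\mathcal{BV}$ is the set of $g:\mathbb R\to\mathbb R$ with finite variation $Vg=\sup\sum_i|g(x_i)-g(y_i)|$ (supremum over finite families of disjoint intervals $(x_i,y_i)$), with norm $\|g\|_{\mathcal{BV}}=|g(-\infty)|+Vg$. For $h\in\mathcal A_C$ with primitive $H$ and $g\in\mathcal{BV}$, $\int_{-\infty}^\infty hg=H(\infty)g(\infty)-\int_{-\infty}^\infty H\,dg$ (Henstock–Stieltjes integral). For $f\in\mathcal A_C$ with primitive $F$ and $x\in\mathbb R$, $f(x-\cdot)$ is the element of $\mathcal A_C$ with primitive $y\mapsto F(\infty)-F(x-y)$, and $f*g(x)=\int_{-\infty}^\infty f(x-y)g(y)\,dy$ is the product integral of $f(x-\cdot)$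 and $g$. (It is known that $f*g\in C^0(\overline{\mathbb R})$.) *)

theory Defs
  imports "HOL-Analysis.Analysis"
begin

text \<open>Elements f of A_C are represented by their (unique) primitives F in B_C.\<close>

definition B_C :: "(real \<Rightarrow> real) set" where
  "B_C = {F. continuous_on UNIV F \<and> (\<exists>L. (F \<longlongrightarrow> L) at_top) \<and> (F \<longlongrightarrow> 0) at_bot}"

definition C0bar :: "(real \<Rightarrow> real) set" where
  "C0bar = {F. continuous_on UNIV F \<and> (\<exists>L. (F \<longlongrightarrow> L) at_top) \<and> (\<exists>L. (F \<longlongrightarrow> L) at_bot)}"

definition at_pinf :: "(real \<Rightarrow> real) \<Rightarrow> real" where
  "at_pinf F = Lim at_top F"

definition at_minf :: "(real \<Rightarrow> real) \<Rightarrow> real" where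
  "at_minf F = Lim at_bot F"

definition supnorm :: "(real \<Rightarrow> real) \<Rightarrow> real" where
  "supnorm F = Sup (range (\<lambda>x. \<bar>F x\<bar>))"

text \<open>Alexiewicz norm of f = F', sup over intervals of |int_I f| = |F b - F a|.\<close>
definition alex :: "(real \<Rightarrow> real) \<Rightarrow> real" where
  "alex F = Sup {\<bar>F b - F a\<bar> | a b. a \<le> b}"

definition var_sums :: "(real \<Rightarrow> real) \<Rightarrow> real set" where
  "var_sums g = {(\<Sum>i<n. \<bar>g (x i) - g (y i)\<bar>) | (n::nat) (x::nat\<Rightarrow>real) (y::nat\<Rightarrow>real).
      (\<forall>i<n. x i < y i) \<and>
      (\<forall>i<n. \<forall>j<n. i \<noteq> j \<longrightarrow> {x i<..<y i} \<inter> {x j<..<y j} = {})}"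

definition BV :: "(real \<Rightarrow> real) set" where
  "BV = {g. bdd_above (var_sums g)}"

definition variation :: "(real \<Rightarrow> real) \<Rightarrow> real" where
  "variation g = Sup (var_sums g)"

definition bvnorm :: "(real \<Rightarrow> real) \<Rightarrow> real" where
  "bvnorm g = \<bar>at_minf g\<bar> + variation g"

definition hs_has_integral_on :: "(real \<Rightarrow> real) \<Rightarrow> (real \<Rightarrow> real) \<Rightarrow> real \<Rightarrow> real \<Rightarrow> real \<Rightarrow> bool" where
  "hs_has_integral_on H g I a b \<longleftrightarrow>
     (\<forall>e>0. \<exists>\<gamma>. gauge \<gamma> \<and>
        (\<forall>p. p tagged_division_of {a..b} \<and> \<gamma> fine p \<longrightarrow>
           \<bar>(\<Sum>(t,K)\<in>p. H t * (g (Sup K) - g (Inf K))) - I\<bar> < e))"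

definition hs_has_integral :: "(real \<Rightarrow> real) \<Rightarrow> (real \<Rightarrow> real) \<Rightarrow> real \<Rightarrow> bool" where
  "hs_has_integral H g I \<longleftrightarrow>
     (\<exists>J. (\<forall>a b. a \<le> b \<longrightarrow> hs_has_integral_on H g (J a b) a b) \<and>
          ((\<lambda>(a,b). J a b) \<longlongrightarrow> I) (at_bot \<times>\<^sub>F at_top))"

definition hs_integral :: "(real \<Rightarrow> real) \<Rightarrow> (real \<Rightarrow> real) \<Rightarrow> real" where
  "hs_integral H g = (THE I. hs_has_integral H g I)"

text \<open>Convolution f*g (f given by its primitive F): the product integral of f(x - .),
  whose primitive is y \<mapsto> F(\<infinity>) - F(x - y), with g.\<close>
definition conv :: "(real \<Rightarrow> real) \<Rightarrow> (real \<Rightarrow> real) \<Rightarrow> real \<Rightarrow> real" where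
  "conv F g x = (let H = (\<lambda>y. at_pinf F - F (x - y))
                 in at_pinf H * at_pinf g - hs_integral H g)"

definition opnorm_Phi :: "(real \<Rightarrow> real) \<Rightarrow> real" where
  "opnorm_Phi F = Sup {supnorm (conv F g) | g. g \<in> BV \<and> bvnorm g \<le> 1}"

definition opnorm_Psi :: "(real \<Rightarrow> real) \<Rightarrow> real" where
  "opnorm_Psi g = Sup {supnorm (conv F g) | F. F \<in> B_C \<and> alex F \<le> 1}"

end

theory Submission
  imports Defs
begin


definition Dl :: "(real \<Rightarrow> real) \<Rightarrow> real set \<Rightarrow> real" where
  "Dl g K = (if K = {} then 0 else g (Sup K) - g (Inf K))"

lemma Dl_ivl: "c \<le> d \<Longrightarrow> Dl g {c..d} = g d - g c"
  by (simp add: Dl_def)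

lemma Dl_ivl_empty: "d < c \<Longrightarrow> Dl g {c..d} = 0"
  by (simp add: Dl_def)

lemma Dl_division:
  assumes "D division_of {u..v}"
  shows "sum (Dl g) D = Dl g {u..v}"
proof -
  interpret operative_real plus 0 "Dl g"
    rewrites "comm_monoid_set.F (+) 0 = sum"
  proof -
    show "operative_real (+) 0 (Dl g)"
    proof
      show "Dl g {a..b} = 0" if "b \<le> a" for a b
        using that by (cases "a = b") (auto simp: Dl_def)
      show "Dl g {a..c} + Dl g {c..b} = Dl g {a..b}" if "a < c" "c < b" for a b c
        using that by (simp add: Dl_def)
    qed
  qed (simp add: sum_def)
  show ?thesis using division[of D u v] assms by simp
qed



definition dfam :: "'i set \<Rightarrow> ('i \<Rightarrow> real) \<Rightarrow> ('i \<Rightarrow> real) \<Rightarrow> bool" where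
  "dfam A x y \<longleftrightarrow> finite A \<and> (\<forall>i\<in>A. x i < y i) \<and>
     (\<forall>i\<in>A. \<forall>j\<in>A. i \<noteq> j \<longrightarrow> {x i<..<y i} \<inter> {x j<..<y j} = {})"

lemma dfamD: assumes "dfam A x y" shows "finite A" "\<forall>i\<in>A. x i < y i"
     "\<forall>i\<in>A. \<forall>j\<in>A. i \<noteq> j \<longrightarrow> {x i<..<y i} \<inter> {x j<..<y j} = {}"
  using assms unfolding dfam_def by blast+

lemma var_sums_0: "0 \<in> var_sums g"
  unfolding var_sums_def by (rule CollectI, rule exI[of _ 0]) auto

lemma var_sums_ne: "var_sums g \<noteq> {}"
  using var_sums_0 by auto

lemma variation_nonneg: "g \<in> BV \<Longrightarrow> 0 \<le> variation g"
  unfolding variation_def BV_def by (auto intro!: cSup_upper var_sums_0)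

lemma dfam_le_var:
  assumes "g \<in> BV" "dfam A x y"
  shows "(\<Sum>i\<in>A. \<bar>g (y i) - g (x i)\<bar>) \<le> variation g"
proof -
  note fin = dfamD(1)[OF assms(2)] and lt = dfamD(2)[OF assms(2)] and dj = dfamD(3)[OF assms(2)]
  obtain h where h: "bij_betw h {0..<card A} A" using ex_bij_betw_nat_finite[OF fin] by blast
  have "(\<Sum>i\<in>A. \<bar>g (y i) - g (x i)\<bar>) = (\<Sum>k<card A. \<bar>g (x (h k)) - g (y (h k))\<bar>)"
    using sum.reindex_bij_betw[OF h, of "\<lambda>i. \<bar>g (y i) - g (x i)\<bar>"]
    by (simp add: atLeast0LessThan abs_minus_commute)
  also have "\<dots> \<in> var_sums g"
  proof -
    have hA: "\<And>k. k < card A \<Longrightarrow> h k \<in> A" using h by (auto simp: bij_betw_def)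
    have hinj: "\<And>i j. i < card A \<Longrightarrow> j < card A \<Longrightarrow> i \<noteq> j \<Longrightarrow> h i \<noteq> h j"
      using h by (auto simp: bij_betw_def inj_on_def)
    have c1: "\<forall>i<card A. (x \<circ> h) i < (y \<circ> h) i" using hA lt by simp
    have c2: "\<forall>i<card A. \<forall>j<card A. i \<noteq> j \<longrightarrow> {(x \<circ> h) i<..<(y \<circ> h) i} \<inter> {(x \<circ> h) j<..<(y \<circ> h) j} = {}"
      unfolding comp_def using hA hinj dj by blast
    have c3: "(\<Sum>k<card A. \<bar>g (x (h k)) - g (y (h k))\<bar>) = (\<Sum>k<card A. \<bar>g ((x \<circ> h) k) - g ((y \<circ> h) k)\<bar>)"
      by simp
    show ?thesis unfolding var_sums_def
      apply (rule CollectI)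
      apply (rule exI[of _ "card A"], rule exI[of _ "x \<circ> h"], rule exI[of _ "y \<circ> h"])
      by (intro conjI c3 c1 c2)
  qed
  then have "(\<Sum>k<card A. \<bar>g (x (h k)) - g (y (h k))\<bar>) \<le> variation g"
    unfolding variation_def by (rule cSup_upper) (use assms(1) in \<open>simp add: BV_def\<close>)
  finally show ?thesis .
qed

lemma dfam_combine_le_var:
  assumes "g \<in> BV" "dfam A x y" "dfam B u v"
    and dj: "\<forall>i\<in>A. \<forall>j\<in>B. {x i<..<y i} \<inter> {u j<..<v j} = {}"
  shows "(\<Sum>i\<in>A. \<bar>g (y i) - g (x i)\<bar>) + (\<Sum>j\<in>B. \<bar>g (v j) - g (u j)\<bar>) \<le> variation g"
proof -
  let ?C = "Inl ` A \<union> Inr ` B"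
  let ?X = "case_sum x u" and ?Y = "case_sum y v"
  note dA = dfamD[OF assms(2)] and dB = dfamD[OF assms(3)]
  have djC: "{?X i<..<?Y i} \<inter> {?X j<..<?Y j} = {}" if "i \<in> ?C" "j \<in> ?C" "i \<noteq> j" for i j
  proof -
    have i: "(\<exists>a\<in>A. i = Inl a) \<or> (\<exists>b\<in>B. i = Inr b)" and j: "(\<exists>a\<in>A. j = Inl a) \<or> (\<exists>b\<in>B. j = Inr b)"
      using that by blast+
    show ?thesis
    proof (cases "\<exists>a\<in>A. i = Inl a")
      case True
      then obtain a where a: "a \<in> A" "i = Inl a" by blast
      show ?thesis
      proof (cases "\<exists>a\<in>A. j = Inl a")
        case True
        then obtain b where b: "b \<in> A" "j = Inl b" by blast
        with a that(3) have "a \<noteq> b" by blast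
        then show ?thesis unfolding a(2) b(2) sum.case using dA(3) a(1) b(1) by blast
      next
        case False
        then obtain b where b: "b \<in> B" "j = Inr b" using j by blast
        then show ?thesis unfolding a(2) b(2) sum.case using dj a(1) b(1) by blast
      qed
    next
      case False
      then obtain a where a: "a \<in> B" "i = Inr a" using i by blast
      show ?thesis
      proof (cases "\<exists>a\<in>A. j = Inl a")
        case True
        then obtain b where b: "b \<in> A" "j = Inl b" by blast
        have "{x b<..<y b} \<inter> {u a<..<v a} = {}" using a b dj by blast
        then show ?thesis unfolding a(2) b(2) sum.case by (simp add: Int_commute)
      next
        case False
        then obtain b where b: "b \<in> B" "j = Inr b" using j by blast
        with a that(3) have "a \<noteq> b" by blast
        then show ?thesis unfolding a(2) b(2) sum.case using dB(3) a(1) b(1) by blast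
      qed
    qed
  qed
  have "dfam ?C ?X ?Y"
    unfolding dfam_def
  proof (intro conjI)
    show "finite ?C" using dA(1) dB(1) by simp
    show "\<forall>i\<in>?C. ?X i < ?Y i" using dA(2) dB(2) by auto
    show "\<forall>i\<in>?C. \<forall>j\<in>?C. i \<noteq> j \<longrightarrow> {?X i<..<?Y i} \<inter> {?X j<..<?Y j} = {}"
      by (intro ballI impI djC)
  qed
  then have "(\<Sum>i\<in>?C. \<bar>g (?Y i) - g (?X i)\<bar>) \<le> variation g"
    by (rule dfam_le_var[OF assms(1)])
  moreover have "(\<Sum>i\<in>?C. \<bar>g (?Y i) - g (?X i)\<bar>) =
      (\<Sum>i\<in>A. \<bar>g (y i) - g (x i)\<bar>) + (\<Sum>j\<in>B. \<bar>g (v j) - g (u j)\<bar>)"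
    using dA(1) dB(1) by (subst sum.union_disjoint) (auto simp: sum.reindex)
  ultimately show ?thesis by simp
qed

lemma BV_tail:
  assumes "g \<in> BV" "\<epsilon> > 0"
  obtains m M where "m \<le> M"
    "\<And>(A::'i set) x y. dfam A x y \<Longrightarrow> (\<forall>i\<in>A. y i \<le> m \<or> M \<le> x i) \<Longrightarrow>
        (\<Sum>i\<in>A. \<bar>g (y i) - g (x i)\<bar>) \<le> \<epsilon>"
proof -
  have "variation g - \<epsilon> < Sup (var_sums g)" using assms(2) by (simp add: variation_def)
  then obtain s where s: "s \<in> var_sums g" "variation g - \<epsilon> < s"
    using less_cSup_iff[OF var_sums_ne] assms(1) unfolding BV_def by blast
  then obtain n :: nat and x y where sdef: "s = (\<Sum>i<n. \<bar>g (x i) - g (y i)\<bar>)"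
    and lt: "\<forall>i<n. x i < y i"
    and dj: "\<forall>i<n. \<forall>j<n. i \<noteq> j \<longrightarrow> {x i<..<y i} \<inter> {x j<..<y j} = {}"
    apply (simp only: var_sums_def mem_Collect_eq)
    apply (elim exE conjE)
    by blast
  define m where "m = Min (insert 0 (x ` {..<n}))"
  define M where "M = Max (insert 0 (y ` {..<n}))"
  have m0: "m \<le> 0" and M0: "0 \<le> M" by (auto simp: m_def M_def)
  have mx: "\<And>k. k < n \<Longrightarrow> m \<le> x k" by (auto simp: m_def)
  have My: "\<And>k. k < n \<Longrightarrow> y k \<le> M" by (auto simp: M_def)
  have fam: "dfam {..<n} x y" using lt dj unfolding dfam_def by simp
  show ?thesis
  proof (rule that[of m M])
    show "m \<le> M" using m0 M0 by simp
    fix A :: "'i set" and u v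
    assume A: "dfam A u v" "\<forall>i\<in>A. v i \<le> m \<or> M \<le> u i"
    have "\<forall>i\<in>A. \<forall>j\<in>{..<n}. {u i<..<v i} \<inter> {x j<..<y j} = {}"
    proof (intro ballI)
      fix i j assume i: "i \<in> A" and j: "j \<in> {..<n}"
      show "{u i<..<v i} \<inter> {x j<..<y j} = {}"
        using A(2) i mx[of j] My[of j] j by fastforce
    qed
    then have "(\<Sum>i\<in>A. \<bar>g (v i) - g (u i)\<bar>) + (\<Sum>j<n. \<bar>g (y j) - g (x j)\<bar>) \<le> variation g"
      using dfam_combine_le_var[OF assms(1) A(1) fam] by blast
    moreover have "(\<Sum>j<n. \<bar>g (y j) - g (x j)\<bar>) = s"
      by (simp add: sdef abs_minus_commute)
    ultimately show "(\<Sum>i\<in>A. \<bar>g (v i) - g (u i)\<bar>) \<le> \<epsilon>" using s(2) by linarith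
  qed
qed

lemma BV_cauchy:
  assumes "g \<in> BV" "\<epsilon> > 0"
  obtains m M where "\<And>s t. M \<le> s \<Longrightarrow> M \<le> t \<Longrightarrow> \<bar>g s - g t\<bar> \<le> \<epsilon>"
    "\<And>s t. s \<le> m \<Longrightarrow> t \<le> m \<Longrightarrow> \<bar>g s - g t\<bar> \<le> \<epsilon>"
proof -
  obtain m M where mM: "m \<le> M"
    "\<And>(A::nat set) x y. dfam A x y \<Longrightarrow> (\<forall>i\<in>A. y i \<le> m \<or> M \<le> x i) \<Longrightarrow>
        (\<Sum>i\<in>A. \<bar>g (y i) - g (x i)\<bar>) \<le> \<epsilon>"
    using BV_tail[OF assms] by blast
  have one: "\<bar>g t - g s\<bar> \<le> \<epsilon>" if "s < t" "t \<le> m \<or> M \<le> s" for s t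
  proof -
    have "dfam {0::nat} (\<lambda>_. s) (\<lambda>_. t)" using that by (simp add: dfam_def)
    from mM(2)[OF this] that show ?thesis by simp
  qed
  have two: "\<bar>g s - g t\<bar> \<le> \<epsilon>" if "(t \<le> m \<and> s \<le> m) \<or> (M \<le> s \<and> M \<le> t)" for s t
  proof (cases s t rule: linorder_cases)
    case less then show ?thesis using one[of s t] that by (auto simp: abs_minus_commute)
  next
    case equal then show ?thesis using assms(2) by simp
  next
    case greater then show ?thesis using one[of t s] that by auto
  qed
  show ?thesis by (rule that[of M m]) (use two in auto)
qed

lemma cauchy_at_top:
  fixes f :: "real \<Rightarrow> real"
  assumes "\<And>\<epsilon>. \<epsilon> > 0 \<Longrightarrow> \<exists>M. \<forall>s t. M \<le> s \<longrightarrow> M \<le> t \<longrightarrow> \<bar>f s - f t\<bar> \<le> \<epsilon>"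
  shows "\<exists>L. (f \<longlongrightarrow> L) at_top"
proof -
  define u where "u n = f (real n)" for n :: nat
  have "Cauchy u"
  proof (rule CauchyI)
    fix e :: real assume e: "e > 0"
    then obtain M where M: "\<forall>s t. M \<le> s \<longrightarrow> M \<le> t \<longrightarrow> \<bar>f s - f t\<bar> \<le> e/2"
      using assms[of "e/2"] by auto
    show "\<exists>N. \<forall>m\<ge>N. \<forall>n\<ge>N. norm (u m - u n) < e"
    proof (intro exI allI impI)
      fix m n assume "nat \<lceil>M\<rceil> \<le> m" "nat \<lceil>M\<rceil> \<le> n"
      then have "M \<le> real m" "M \<le> real n" by linarith+
      then show "norm (u m - u n) < e" using M e by (force simp: u_def)
    qed
  qed
  then obtain L where L: "u \<longlonglongrightarrow> L" using Cauchy_convergent_iff convergent_def by blast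
  have "(f \<longlongrightarrow> L) at_top"
  proof (rule tendstoI)
    fix e :: real assume e: "e > 0"
    then obtain M where M: "\<forall>s t. M \<le> s \<longrightarrow> M \<le> t \<longrightarrow> \<bar>f s - f t\<bar> \<le> e/3"
      using assms[of "e/3"] by auto
    from L e obtain N where N: "\<forall>n\<ge>N. dist (u n) L < e/3"
      unfolding lim_sequentially by (meson divide_pos_pos zero_less_numeral)
    define n where "n = max N (nat \<lceil>M\<rceil>)"
    have n1: "dist (u n) L < e/3" using N by (simp add: n_def)
    have n2: "M \<le> real n" unfolding n_def by linarith
    show "eventually (\<lambda>s. dist (f s) L < e) at_top"
      unfolding eventually_at_top_linorder
    proof (intro exI allI impI)
      fix s assume "M \<le> s"
      then have "\<bar>f s - u n\<bar> \<le> e/3" using M n2 by (simp add: u_def)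
      then show "dist (f s) L < e" using n1 e abs_triangle_ineq[of "f s - u n" "u n - L"]
        by (simp add: dist_real_def)
    qed
  qed
  then show ?thesis by blast
qed

lemma cauchy_at_bot:
  fixes f :: "real \<Rightarrow> real"
  assumes "\<And>\<epsilon>. \<epsilon> > 0 \<Longrightarrow> \<exists>m. \<forall>s t. s \<le> m \<longrightarrow> t \<le> m \<longrightarrow> \<bar>f s - f t\<bar> \<le> \<epsilon>"
  shows "\<exists>L. (f \<longlongrightarrow> L) at_bot"
proof -
  have "\<exists>L. ((\<lambda>x. f (- x)) \<longlongrightarrow> L) at_top"
  proof (rule cauchy_at_top)
    fix \<epsilon> :: real assume "\<epsilon> > 0"
    then obtain m where m: "\<forall>s t. s \<le> m \<longrightarrow> t \<le> m \<longrightarrow> \<bar>f s - f t\<bar> \<le> \<epsilon>" using assms by blast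
    show "\<exists>M. \<forall>s t. M \<le> s \<longrightarrow> M \<le> t \<longrightarrow> \<bar>f (- s) - f (- t)\<bar> \<le> \<epsilon>"
      by (rule exI[of _ "-m"]) (use m in auto)
  qed
  then show ?thesis by (simp add: at_bot_mirror filterlim_filtermap)
qed

lemma BV_lim:
  assumes "g \<in> BV"
  shows "\<exists>L. (g \<longlongrightarrow> L) at_top" "\<exists>L. (g \<longlongrightarrow> L) at_bot"
proof -
  show "\<exists>L. (g \<longlongrightarrow> L) at_top"
  proof (rule cauchy_at_top)
    fix e :: real assume "e > 0"
    from BV_cauchy[OF assms this] show "\<exists>M. \<forall>s t. M \<le> s \<longrightarrow> M \<le> t \<longrightarrow> \<bar>g s - g t\<bar> \<le> e" by metis
  qed
  show "\<exists>L. (g \<longlongrightarrow> L) at_bot"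
  proof (rule cauchy_at_bot)
    fix e :: real assume "e > 0"
    from BV_cauchy[OF assms this] show "\<exists>m. \<forall>s t. s \<le> m \<longrightarrow> t \<le> m \<longrightarrow> \<bar>g s - g t\<bar> \<le> e" by metis
  qed
qed



definition RS :: "(real \<Rightarrow> real) \<Rightarrow> (real \<Rightarrow> real) \<Rightarrow> (real \<times> real set) set \<Rightarrow> real" where
  "RS H g p = (\<Sum>(t,K)\<in>p. H t * (g (Sup K) - g (Inf K)))"

lemma Dl_degen: "q \<le> p \<Longrightarrow> Dl g {p..q} = 0"
  by (cases "p = q") (auto simp: Dl_def)

lemma Dl_null: "interior {p..q} = {} \<Longrightarrow> Dl g {p..q} = (0::real)"
  by (rule Dl_degen) (auto simp: greaterThanLessThan_empty_iff)

lemma td_ivl: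
  assumes "p tagged_division_of (S::real set)" "(t, K) \<in> p"
  shows "\<exists>c d. c \<le> d \<and> K = {c..d} \<and> t \<in> K"
proof -
  obtain c d where "K = cbox c d" using tagged_division_ofD(4)[OF assms] by blast
  then have K: "K = {c..d}" by (simp add: box_real(2))
  have "t \<in> K" using tagged_division_ofD(2)[OF assms] .
  with K show ?thesis by auto
qed

lemma td_sub:
  assumes "p tagged_division_of (S::real set)" "(t, K) \<in> p"
  shows "K \<subseteq> S"
  using tagged_division_ofD(3)[OF assms] .

lemma RS_Dl:
  assumes "p tagged_division_of (S::real set)"
  shows "RS H g p = (\<Sum>(t,K)\<in>p. H t * Dl g K)"
  unfolding RS_def
proof (rule sum.cong[OF refl])
  fix u assume u: "u \<in> p"
  obtain t K where tK: "u = (t, K)" by fastforce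
  obtain c d where "c \<le> d" "K = {c..d}" using td_ivl[OF assms u[unfolded tK]] by blast
  then show "(case u of (t, K) \<Rightarrow> H t * (g (Sup K) - g (Inf K))) = (case u of (t, K) \<Rightarrow> H t * Dl g K)"
    unfolding tK by (simp add: Dl_def)
qed

lemma Dl_split:
  assumes q: "q tagged_division_of {a..b}" and K: "{c..d} \<subseteq> {a..b}"
  shows "Dl g {c..d} = (\<Sum>(s,L)\<in>q. Dl g ({c..d} \<inter> L))"
proof -
  let ?K = "{c..d}"
  define D where "D = snd ` q"
  have D: "D division_of {a..b}" unfolding D_def using division_of_tagged_division[OF q] .
  let ?E = "{cbox c d \<inter> k | k. k \<in> D \<and> cbox c d \<inter> k \<noteq> {}}"
  have E: "?E division_of cbox c d"
    by (rule division_inter_1) (use D K in auto)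
  have E': "{?K \<inter> k | k. k \<in> D \<and> ?K \<inter> k \<noteq> {}} division_of {c..d}"
    using E by simp
  have 1: "sum (Dl g) {?K \<inter> k | k. k \<in> D \<and> ?K \<inter> k \<noteq> {}} = Dl g ?K"
    using Dl_division[OF E'] .
  define D' where "D' = {L \<in> D. ?K \<inter> L \<noteq> {}}"
  have finD: "finite D" using D by blast
  have Dsub: "D' \<subseteq> D" by (auto simp: D'_def)
  have img: "{?K \<inter> k | k. k \<in> D \<and> ?K \<inter> k \<noteq> {}} = (\<lambda>L. ?K \<inter> L) ` D'"
    by (auto simp: D'_def)
  have Divl: "\<And>L. L \<in> D \<Longrightarrow> \<exists>u v. L = {u..v}"
  proof -
    fix L assume "L \<in> D"
    then obtain u v where "L = cbox u v" using division_ofD(4)[OF D] by blast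
    then show "\<exists>u v. L = {u..v}" by auto
  qed
  have 2: "sum (Dl g) ((\<lambda>L. ?K \<inter> L) ` D') = sum (Dl g \<circ> (\<lambda>L. ?K \<inter> L)) D'"
  proof (rule sum.reindex_nontrivial)
    show "finite D'" using finD Dsub finite_subset by blast
    fix L1 L2 assume L1: "L1 \<in> D'" and L2: "L2 \<in> D'" and ne: "L1 \<noteq> L2" and eq: "?K \<inter> L1 = ?K \<inter> L2"
    have "interior L1 \<inter> interior L2 = {}"
      using division_ofD(5)[OF D, of L1 L2] L1 L2 ne Dsub by blast
    moreover have "?K \<inter> L1 \<subseteq> L1" "?K \<inter> L1 \<subseteq> L2" using eq by blast+
    ultimately have "interior (?K \<inter> L1) = {}"
      using interior_mono by blast
    moreover obtain u v where "L1 = {u..v}" using Divl L1 Dsub by blast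
    ultimately show "Dl g (?K \<inter> L1) = 0"
      using Dl_null[of "max c u" "min d v" g] by simp
  qed
  have 3: "(\<Sum>L\<in>D. Dl g (?K \<inter> L)) = (\<Sum>L\<in>D'. Dl g (?K \<inter> L))"
    by (rule sum.mono_neutral_right[OF finD Dsub]) (auto simp: D'_def Dl_def)
  have 4: "(\<Sum>(s,L)\<in>q. Dl g (?K \<inter> L)) = (\<Sum>L\<in>D. Dl g (?K \<inter> L))"
    unfolding D_def
  proof (rule sum.over_tagged_division_lemma[OF q, of "\<lambda>L. Dl g (?K \<inter> L)"])
    fix u v :: real assume "box u v = {}"
    then have "v \<le> u" by (simp add: greaterThanLessThan_empty_iff)
    then show "Dl g (?K \<inter> cbox u v) = 0" by (simp add: Dl_degen)
  qed
  show ?thesis using 1 2 3 4 img by simp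
qed


lemma Dl_fam:
  assumes fin: "finite S" and iv: "\<forall>i\<in>S. \<exists>c d. f i = {c..d}"
    and dj: "\<forall>i\<in>S. \<forall>j\<in>S. i \<noteq> j \<longrightarrow> interior (f i) \<inter> interior (f j) = {}"
  shows "\<exists>S' x y. S' \<subseteq> S \<and> dfam S' x y \<and> (\<forall>i\<in>S'. f i = {x i..y i}) \<and>
     (\<Sum>i\<in>S. \<bar>Dl g (f i)\<bar>) = (\<Sum>i\<in>S'. \<bar>g (y i) - g (x i)\<bar>)"
proof -
  from iv obtain cc dd where cd: "\<forall>i\<in>S. f i = {cc i..dd i}" by metis
  define S' where "S' = {i\<in>S. cc i < dd i}"
  have sub: "S' \<subseteq> S" by (auto simp: S'_def)
  have fam: "dfam S' cc dd"
    unfolding dfam_def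
  proof (intro conjI)
    show "finite S'" using fin sub finite_subset by blast
    show "\<forall>i\<in>S'. cc i < dd i" by (simp add: S'_def)
    show "\<forall>i\<in>S'. \<forall>j\<in>S'. i \<noteq> j \<longrightarrow> {cc i<..<dd i} \<inter> {cc j<..<dd j} = {}"
    proof (intro ballI impI)
      fix i j assume "i \<in> S'" "j \<in> S'" "i \<noteq> j"
      then have "interior (f i) \<inter> interior (f j) = {}" "i \<in> S" "j \<in> S" using dj sub by blast+
      then show "{cc i<..<dd i} \<inter> {cc j<..<dd j} = {}" using cd by simp
    qed
  qed
  have "(\<Sum>i\<in>S. \<bar>Dl g (f i)\<bar>) = (\<Sum>i\<in>S'. \<bar>Dl g (f i)\<bar>)"
  proof (rule sum.mono_neutral_right[OF fin sub])
    show "\<forall>i\<in>S - S'. \<bar>Dl g (f i)\<bar> = 0"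
    proof
      fix i assume "i \<in> S - S'"
      then have "dd i \<le> cc i" "f i = {cc i..dd i}" using cd by (auto simp: S'_def)
      then show "\<bar>Dl g (f i)\<bar> = 0" by (simp add: Dl_degen)
    qed
  qed
  also have "\<dots> = (\<Sum>i\<in>S'. \<bar>g (dd i) - g (cc i)\<bar>)"
  proof (rule sum.cong[OF refl])
    fix i assume "i \<in> S'"
    then have "cc i < dd i" "f i = {cc i..dd i}" using cd by (auto simp: S'_def)
    then show "\<bar>Dl g (f i)\<bar> = \<bar>g (dd i) - g (cc i)\<bar>" by (simp add: Dl_ivl)
  qed
  finally show ?thesis using sub fam cd by blast
qed

lemma Dl_fam_var:
  assumes "g \<in> BV" "finite S" "\<forall>i\<in>S. \<exists>c d. f i = {c..d}"
    "\<forall>i\<in>S. \<forall>j\<in>S. i \<noteq> j \<longrightarrow> interior (f i) \<inter> interior (f j) = {}"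
  shows "(\<Sum>i\<in>S. \<bar>Dl g (f i)\<bar>) \<le> variation g"
proof -
  obtain S' x y where "S' \<subseteq> S" "dfam S' x y" "(\<Sum>i\<in>S. \<bar>Dl g (f i)\<bar>) = (\<Sum>i\<in>S'. \<bar>g (y i) - g (x i)\<bar>)"
    using Dl_fam[OF assms(2-4), of g] by blast
  then show ?thesis using dfam_le_var[OF assms(1)] by simp
qed

lemma td_fam_props:
  assumes p: "p tagged_division_of (S::real set)" and P: "P \<subseteq> p"
  shows "finite P" "\<forall>i\<in>P. \<exists>c d. snd i = {c..d}"
    "\<forall>i\<in>P. \<forall>j\<in>P. i \<noteq> j \<longrightarrow> interior (snd i) \<inter> interior (snd j) = {}"
proof -
  show "finite P" using tagged_division_ofD(1)[OF p] P finite_subset by blast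
  show "\<forall>i\<in>P. \<exists>c d. snd i = {c..d}"
  proof
    fix i assume "i \<in> P"
    then have "(fst i, snd i) \<in> p" using P by auto
    from td_ivl[OF p this] show "\<exists>c d. snd i = {c..d}" by blast
  qed
  show "\<forall>i\<in>P. \<forall>j\<in>P. i \<noteq> j \<longrightarrow> interior (snd i) \<inter> interior (snd j) = {}"
  proof (intro ballI impI)
    fix i j assume "i \<in> P" "j \<in> P" "i \<noteq> j"
    then have "(fst i, snd i) \<in> p" "(fst j, snd j) \<in> p" "(fst i, snd i) \<noteq> (fst j, snd j)"
      using P by (auto simp: prod_eq_iff)
    from tagged_division_ofD(5)[OF p this] show "interior (snd i) \<inter> interior (snd j) = {}" .
  qed
qed

lemma pq_fam_props:
  assumes p: "p tagged_division_of (S::real set)" and q: "q tagged_division_of (S'::real set)"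
  shows "finite (p \<times> q)" "\<forall>i\<in>p \<times> q. \<exists>c d. snd (fst i) \<inter> snd (snd i) = {c..d}"
    "\<forall>i\<in>p \<times> q. \<forall>j\<in>p \<times> q. i \<noteq> j \<longrightarrow>
        interior (snd (fst i) \<inter> snd (snd i)) \<inter> interior (snd (fst j) \<inter> snd (snd j)) = {}"
proof -
  note P = td_fam_props[OF p order_refl] and Q = td_fam_props[OF q order_refl]
  show "finite (p \<times> q)" using P(1) Q(1) by simp
  show "\<forall>i\<in>p \<times> q. \<exists>c d. snd (fst i) \<inter> snd (snd i) = {c..d}"
  proof
    fix i assume "i \<in> p \<times> q"
    then obtain c d c' d' where "snd (fst i) = {c..d}" "snd (snd i) = {c'..d'}"
      using P(2) Q(2) by (metis mem_Times_iff)
    then have "snd (fst i) \<inter> snd (snd i) = {max c c'..min d d'}" by simp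
    then show "\<exists>c d. snd (fst i) \<inter> snd (snd i) = {c..d}" by blast
  qed
  show "\<forall>i\<in>p \<times> q. \<forall>j\<in>p \<times> q. i \<noteq> j \<longrightarrow>
        interior (snd (fst i) \<inter> snd (snd i)) \<inter> interior (snd (fst j) \<inter> snd (snd j)) = {}"
  proof (intro ballI impI)
    fix i j assume i: "i \<in> p \<times> q" and j: "j \<in> p \<times> q" and ne: "i \<noteq> j"
    have s1: "interior (snd (fst i) \<inter> snd (snd i)) \<subseteq> interior (snd (fst i))"
      "interior (snd (fst i) \<inter> snd (snd i)) \<subseteq> interior (snd (snd i))"
      "interior (snd (fst j) \<inter> snd (snd j)) \<subseteq> interior (snd (fst j))"
      "interior (snd (fst j) \<inter> snd (snd j)) \<subseteq> interior (snd (snd j))"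
      by (simp_all add: interior_mono)
    show "interior (snd (fst i) \<inter> snd (snd i)) \<inter> interior (snd (fst j) \<inter> snd (snd j)) = {}"
    proof (cases "fst i = fst j")
      case True
      then have "snd i \<noteq> snd j" using ne by (simp add: prod_eq_iff)
      then have "interior (snd (snd i)) \<inter> interior (snd (snd j)) = {}"
        using Q(3) i j by (metis mem_Times_iff)
      then show ?thesis using s1 by blast
    next
      case False
      then have "interior (snd (fst i)) \<inter> interior (snd (fst j)) = {}"
        using P(3) i j by (metis mem_Times_iff)
      then show ?thesis using s1 by blast
    qed
  qed
qed


lemma RS_fs:
  assumes "p tagged_division_of (S::real set)"
  shows "RS H g p = (\<Sum>u\<in>p. H (fst u) * Dl g (snd u))"
  unfolding RS_Dl[OF assms] by (simp add: case_prod_unfold)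

lemma RS_double:
  assumes p: "p tagged_division_of {a..b}" and q: "q tagged_division_of {a..b}"
  shows "RS H g p = (\<Sum>u\<in>p. \<Sum>v\<in>q. H (fst u) * Dl g (snd u \<inter> snd v))"
proof -
  have "RS H g p = (\<Sum>u\<in>p. H (fst u) * Dl g (snd u))" by (rule RS_fs[OF p])
  also have "\<dots> = (\<Sum>u\<in>p. \<Sum>v\<in>q. H (fst u) * Dl g (snd u \<inter> snd v))"
  proof (rule sum.cong[OF refl])
    fix u assume u: "u \<in> p"
    then have u': "(fst u, snd u) \<in> p" by simp
    obtain c d where cd: "snd u = {c..d}" using td_ivl[OF p u'] by blast
    have "snd u \<subseteq> {a..b}" using td_sub[OF p u'] .
    then have "Dl g (snd u) = (\<Sum>(s,L)\<in>q. Dl g (snd u \<inter> L))" using Dl_split[OF q, of c d g] cd by simp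
    then have "Dl g (snd u) = (\<Sum>v\<in>q. Dl g (snd u \<inter> snd v))" by (simp add: case_prod_unfold)
    then show "H (fst u) * Dl g (snd u) = (\<Sum>v\<in>q. H (fst u) * Dl g (snd u \<inter> snd v))"
      by (simp add: sum_distrib_left)
  qed
  finally show ?thesis .
qed

lemma RS_diff:
  assumes p: "p tagged_division_of {a..b}" and q: "q tagged_division_of {a..b}"
    and fp: "(\<lambda>t. ball t (\<delta>/2)) fine p" and fq: "(\<lambda>t. ball t (\<delta>/2)) fine q"
    and Hc: "\<And>s t. s \<in> {a..b} \<Longrightarrow> t \<in> {a..b} \<Longrightarrow> \<bar>s - t\<bar> < \<delta> \<Longrightarrow> \<bar>H s - H t\<bar> \<le> \<epsilon>"
    and e0: "0 \<le> \<epsilon>" and g: "g \<in> BV"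
  shows "\<bar>RS H g p - RS H g q\<bar> \<le> \<epsilon> * variation g"
proof -
  have 1: "RS H g p = (\<Sum>u\<in>p. \<Sum>v\<in>q. H (fst u) * Dl g (snd u \<inter> snd v))"
    by (rule RS_double[OF p q])
  have "RS H g q = (\<Sum>v\<in>q. \<Sum>u\<in>p. H (fst v) * Dl g (snd v \<inter> snd u))"
    by (rule RS_double[OF q p])
  also have "\<dots> = (\<Sum>u\<in>p. \<Sum>v\<in>q. H (fst v) * Dl g (snd u \<inter> snd v))"
    by (subst sum.swap) (simp add: Int_commute)
  finally have 2: "RS H g q = (\<Sum>u\<in>p. \<Sum>v\<in>q. H (fst v) * Dl g (snd u \<inter> snd v))" .
  have "RS H g p - RS H g q = (\<Sum>u\<in>p. \<Sum>v\<in>q. (H (fst u) - H (fst v)) * Dl g (snd u \<inter> snd v))"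
    unfolding 1 2 by (simp add: sum_subtractf left_diff_distrib)
  then have "\<bar>RS H g p - RS H g q\<bar> \<le> (\<Sum>u\<in>p. \<bar>\<Sum>v\<in>q. (H (fst u) - H (fst v)) * Dl g (snd u \<inter> snd v)\<bar>)"
    by (simp add: sum_abs)
  also have "\<dots> \<le> (\<Sum>u\<in>p. \<Sum>v\<in>q. \<epsilon> * \<bar>Dl g (snd u \<inter> snd v)\<bar>)"
  proof (rule sum_mono)
    fix u assume u: "u \<in> p"
    have "\<bar>\<Sum>v\<in>q. (H (fst u) - H (fst v)) * Dl g (snd u \<inter> snd v)\<bar>
        \<le> (\<Sum>v\<in>q. \<bar>(H (fst u) - H (fst v)) * Dl g (snd u \<inter> snd v)\<bar>)" by (rule sum_abs)
    also have "\<dots> \<le> (\<Sum>v\<in>q. \<epsilon> * \<bar>Dl g (snd u \<inter> snd v)\<bar>)"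
    proof (rule sum_mono)
      fix v assume v: "v \<in> q"
      show "\<bar>(H (fst u) - H (fst v)) * Dl g (snd u \<inter> snd v)\<bar> \<le> \<epsilon> * \<bar>Dl g (snd u \<inter> snd v)\<bar>"
      proof (cases "snd u \<inter> snd v = {}")
        case True
        then show ?thesis by (simp add: Dl_def)
      next
        case False
        then obtain z where z: "z \<in> snd u" "z \<in> snd v" by blast
        have u': "(fst u, snd u) \<in> p" and v': "(fst v, snd v) \<in> q" using u v by simp_all
        have "snd u \<subseteq> ball (fst u) (\<delta>/2)" using fineD[OF fp u'] by simp
        then have zu: "dist (fst u) z < \<delta>/2" using z by auto
        have "snd v \<subseteq> ball (fst v) (\<delta>/2)" using fineD[OF fq v'] by simp
        then have zv: "dist (fst v) z < \<delta>/2" using z by auto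
        have "\<bar>fst u - fst v\<bar> < \<delta>" using zu zv unfolding dist_real_def by linarith
        moreover have "fst u \<in> {a..b}" using tagged_division_ofD(2,3)[OF p u'] by blast
        moreover have "fst v \<in> {a..b}" using tagged_division_ofD(2,3)[OF q v'] by blast
        ultimately have "\<bar>H (fst u) - H (fst v)\<bar> \<le> \<epsilon>" using Hc by blast
        then show ?thesis by (simp add: abs_mult mult_right_mono)
      qed
    qed
    finally show "\<bar>\<Sum>v\<in>q. (H (fst u) - H (fst v)) * Dl g (snd u \<inter> snd v)\<bar>
        \<le> (\<Sum>v\<in>q. \<epsilon> * \<bar>Dl g (snd u \<inter> snd v)\<bar>)" .
  qed
  also have "\<dots> = \<epsilon> * (\<Sum>w\<in>p \<times> q. \<bar>Dl g (snd (fst w) \<inter> snd (snd w))\<bar>)"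
    by (simp add: sum_distrib_left sum.cartesian_product case_prod_unfold)
  also have "\<dots> \<le> \<epsilon> * variation g"
  proof (rule mult_left_mono[OF _ e0])
    note PQ = pq_fam_props[OF p q]
    show "(\<Sum>w\<in>p \<times> q. \<bar>Dl g (snd (fst w) \<inter> snd (snd w))\<bar>) \<le> variation g"
      by (rule Dl_fam_var[OF g PQ])
  qed
  finally show ?thesis .
qed


lemma td_sub_fam:
  assumes p: "p tagged_division_of (S::real set)" and P: "P \<subseteq> p"
  shows "\<exists>S' x y. S' \<subseteq> P \<and> dfam S' x y \<and> (\<forall>i\<in>S'. snd i = {x i..y i}) \<and>
     (\<Sum>i\<in>P. \<bar>Dl g (snd i)\<bar>) = (\<Sum>i\<in>S'. \<bar>g (y i) - g (x i)\<bar>)"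
  using Dl_fam[OF td_fam_props[OF p P]] by blast

lemma RS_abs_le:
  assumes p: "p tagged_division_of (S::real set)"
  shows "\<bar>RS H g p\<bar> \<le> (\<Sum>u\<in>p. \<bar>H (fst u)\<bar> * \<bar>Dl g (snd u)\<bar>)"
  unfolding RS_fs[OF p] by (rule order_trans[OF sum_abs]) (simp add: abs_mult)

lemma RS_bound_fam:
  assumes p: "p tagged_division_of {a..b}" and HB: "\<And>t. t \<in> {a..b} \<Longrightarrow> \<bar>H t\<bar> \<le> B" and B0: "0 \<le> B"
    and W: "\<And>(S::(real \<times> real set) set) x y. dfam S x y \<Longrightarrow> (\<forall>i\<in>S. a \<le> x i \<and> y i \<le> b) \<Longrightarrow>
             (\<Sum>i\<in>S. \<bar>g (y i) - g (x i)\<bar>) \<le> W"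
  shows "\<bar>RS H g p\<bar> \<le> B * W"
proof -
  have "\<bar>RS H g p\<bar> \<le> (\<Sum>u\<in>p. \<bar>H (fst u)\<bar> * \<bar>Dl g (snd u)\<bar>)" by (rule RS_abs_le[OF p])
  also have "\<dots> \<le> (\<Sum>u\<in>p. B * \<bar>Dl g (snd u)\<bar>)"
  proof (rule sum_mono)
    fix u assume u: "u \<in> p"
    then have "fst u \<in> {a..b}" using tagged_division_ofD(2,3)[OF p, of "fst u" "snd u"] by auto
    then show "\<bar>H (fst u)\<bar> * \<bar>Dl g (snd u)\<bar> \<le> B * \<bar>Dl g (snd u)\<bar>" using HB by (simp add: mult_right_mono)
  qed
  also have "\<dots> = B * (\<Sum>u\<in>p. \<bar>Dl g (snd u)\<bar>)" by (simp add: sum_distrib_left)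
  also have "\<dots> \<le> B * W"
  proof (rule mult_left_mono[OF _ B0])
    obtain S' x y where S': "S' \<subseteq> p" "dfam S' x y" "\<forall>i\<in>S'. snd i = {x i..y i}"
      "(\<Sum>i\<in>p. \<bar>Dl g (snd i)\<bar>) = (\<Sum>i\<in>S'. \<bar>g (y i) - g (x i)\<bar>)"
      using td_sub_fam[OF p order_refl, of g] by blast
    have "\<forall>i\<in>S'. a \<le> x i \<and> y i \<le> b"
    proof
      fix i assume i: "i \<in> S'"
      then have "x i < y i" using dfamD(2)[OF S'(2)] by blast
      moreover have "snd i \<subseteq> {a..b}" using i S'(1) tagged_division_ofD(3)[OF p, of "fst i" "snd i"] by auto
      ultimately show "a \<le> x i \<and> y i \<le> b" using S'(3) i by auto
    qed
    then show "(\<Sum>u\<in>p. \<bar>Dl g (snd u)\<bar>) \<le> W" using W[OF S'(2)] S'(4) by simp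
  qed
  finally show ?thesis .
qed

lemma RS_bound_var:
  assumes p: "p tagged_division_of {a..b}" and HB: "\<And>t. t \<in> {a..b} \<Longrightarrow> \<bar>H t\<bar> \<le> B" and B0: "0 \<le> B"
    and g: "g \<in> BV"
  shows "\<bar>RS H g p\<bar> \<le> B * variation g"
proof (rule RS_bound_fam[OF p _ B0])
  show "\<And>t. t \<in> {a..b} \<Longrightarrow> \<bar>H t\<bar> \<le> B" by (rule HB)
  fix S :: "(real \<times> real set) set" and x y assume "dfam S x y"
  then show "(\<Sum>i\<in>S. \<bar>g (y i) - g (x i)\<bar>) \<le> variation g" by (rule dfam_le_var[OF g])
qed

lemma RS_bound_split:
  assumes p: "p tagged_division_of {a..b}" and fp: "(\<lambda>t. ball t r) fine p"
    and HB: "\<And>t. t \<in> {a..b} \<Longrightarrow> \<bar>H t\<bar> \<le> B"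
    and HB1: "\<And>t. t \<in> {a..b} \<Longrightarrow> m - r \<le> t \<Longrightarrow> t \<le> M + r \<Longrightarrow> \<bar>H t\<bar> \<le> B1"
    and B0: "0 \<le> B" and B10: "0 \<le> B1" and g: "g \<in> BV"
    and T: "\<And>(S::(real \<times> real set) set) x y. dfam S x y \<Longrightarrow> (\<forall>i\<in>S. y i \<le> m \<or> M \<le> x i) \<Longrightarrow>
             (\<Sum>i\<in>S. \<bar>g (y i) - g (x i)\<bar>) \<le> T"
  shows "\<bar>RS H g p\<bar> \<le> B1 * variation g + B * T"
proof -
  define P1 where "P1 = {u\<in>p. m - r \<le> fst u \<and> fst u \<le> M + r}"
  have P1p: "P1 \<subseteq> p" by (auto simp: P1_def)
  have finp: "finite p" using tagged_division_ofD(1)[OF p] .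
  have tag: "\<And>u. u \<in> p \<Longrightarrow> fst u \<in> {a..b}"
    using tagged_division_ofD(2,3)[OF p] by (metis prod.collapse subsetD)
  have "\<bar>RS H g p\<bar> \<le> (\<Sum>u\<in>p. \<bar>H (fst u)\<bar> * \<bar>Dl g (snd u)\<bar>)" by (rule RS_abs_le[OF p])
  also have "\<dots> = (\<Sum>u\<in>p - P1. \<bar>H (fst u)\<bar> * \<bar>Dl g (snd u)\<bar>) + (\<Sum>u\<in>P1. \<bar>H (fst u)\<bar> * \<bar>Dl g (snd u)\<bar>)"
    by (rule sum.subset_diff[OF P1p finp])
  also have "(\<Sum>u\<in>P1. \<bar>H (fst u)\<bar> * \<bar>Dl g (snd u)\<bar>) \<le> B1 * variation g"
  proof -
    have "(\<Sum>u\<in>P1. \<bar>H (fst u)\<bar> * \<bar>Dl g (snd u)\<bar>) \<le> (\<Sum>u\<in>P1. B1 * \<bar>Dl g (snd u)\<bar>)"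
    proof (rule sum_mono)
      fix u assume "u \<in> P1"
      then have "\<bar>H (fst u)\<bar> \<le> B1" using HB1 tag by (auto simp: P1_def)
      then show "\<bar>H (fst u)\<bar> * \<bar>Dl g (snd u)\<bar> \<le> B1 * \<bar>Dl g (snd u)\<bar>" by (simp add: mult_right_mono)
    qed
    also have "\<dots> = B1 * (\<Sum>u\<in>P1. \<bar>Dl g (snd u)\<bar>)" by (simp add: sum_distrib_left)
    also have "\<dots> \<le> B1 * variation g"
      by (rule mult_left_mono[OF Dl_fam_var[OF g td_fam_props[OF p P1p]] B10])
    finally show ?thesis .
  qed
  also have "(\<Sum>u\<in>p - P1. \<bar>H (fst u)\<bar> * \<bar>Dl g (snd u)\<bar>) \<le> B * T"
  proof -
    have P2p: "p - P1 \<subseteq> p" by blast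
    have "(\<Sum>u\<in>p - P1. \<bar>H (fst u)\<bar> * \<bar>Dl g (snd u)\<bar>) \<le> (\<Sum>u\<in>p - P1. B * \<bar>Dl g (snd u)\<bar>)"
    proof (rule sum_mono)
      fix u assume "u \<in> p - P1"
      then have "\<bar>H (fst u)\<bar> \<le> B" using HB tag by auto
      then show "\<bar>H (fst u)\<bar> * \<bar>Dl g (snd u)\<bar> \<le> B * \<bar>Dl g (snd u)\<bar>" by (simp add: mult_right_mono)
    qed
    also have "\<dots> = B * (\<Sum>u\<in>p - P1. \<bar>Dl g (snd u)\<bar>)" by (simp add: sum_distrib_left)
    also have "\<dots> \<le> B * T"
    proof (rule mult_left_mono[OF _ B0])
      obtain S' x y where S': "S' \<subseteq> p - P1" "dfam S' x y" "\<forall>i\<in>S'. snd i = {x i..y i}"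
        "(\<Sum>i\<in>p - P1. \<bar>Dl g (snd i)\<bar>) = (\<Sum>i\<in>S'. \<bar>g (y i) - g (x i)\<bar>)"
        using td_sub_fam[OF p P2p, of g] by blast
      have "\<forall>i\<in>S'. y i \<le> m \<or> M \<le> x i"
      proof
        fix i assume i: "i \<in> S'"
        then have xy: "x i < y i" using dfamD(2)[OF S'(2)] by blast
        have ip: "i \<in> p" "i \<notin> P1" using i S'(1) by auto
        then have out: "fst i < m - r \<or> M + r < fst i" by (auto simp: P1_def)
        have "snd i \<subseteq> ball (fst i) r" using fineD[OF fp, of "fst i" "snd i"] ip(1) by simp
        moreover have "x i \<in> snd i" "y i \<in> snd i" using S'(3) i xy by auto
        ultimately have "x i \<in> ball (fst i) r" "y i \<in> ball (fst i) r" by auto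
        then have "\<bar>fst i - x i\<bar> < r" "\<bar>fst i - y i\<bar> < r" by (auto simp: dist_real_def)
        then show "y i \<le> m \<or> M \<le> x i" using out by linarith
      qed
      then show "(\<Sum>u\<in>p - P1. \<bar>Dl g (snd u)\<bar>) \<le> T" using T[OF S'(2)] S'(4) by simp
    qed
    finally show ?thesis .
  qed
  finally show ?thesis by simp
qed



declare tagged_division_ofD[rule del] division_ofD[rule del]

lemma hs_on_iff:
  "hs_has_integral_on H g I a b \<longleftrightarrow>
    (\<forall>e>0. \<exists>\<gamma>. gauge \<gamma> \<and> (\<forall>p. p tagged_division_of {a..b} \<and> \<gamma> fine p \<longrightarrow> \<bar>RS H g p - I\<bar> < e))"
  by (simp add: hs_has_integral_on_def RS_def)

lemma fine_mono: "d1 fine p \<Longrightarrow> (\<And>x. d1 x \<subseteq> d2 x) \<Longrightarrow> d2 fine p"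
  unfolding fine_def by blast

lemma RS_exists:
  assumes ab: "a \<le> b" and H: "continuous_on {a..b} H" and g: "g \<in> BV"
  shows "\<exists>I. \<forall>e>0. \<exists>\<delta>>0. \<forall>p. p tagged_division_of {a..b} \<and> (\<lambda>t. ball t \<delta>) fine p \<longrightarrow> \<bar>RS H g p - I\<bar> \<le> e"
proof -
  have uc: "uniformly_continuous_on {a..b} H"
    by (rule compact_uniformly_continuous[OF H compact_Icc])
  have "\<forall>n::nat. \<exists>d>0. \<forall>s\<in>{a..b}. \<forall>t\<in>{a..b}. \<bar>s - t\<bar> < d \<longrightarrow> \<bar>H s - H t\<bar> \<le> 1 / (real n + 1)"
  proof
    fix n :: nat
    have "(1 / (real n + 1)) > 0" by simp
    then obtain d where d: "d > 0" "\<forall>x\<in>{a..b}. \<forall>x'\<in>{a..b}. dist x' x < d \<longrightarrow> dist (H x') (H x) < 1 / (real n + 1)"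
      using uc unfolding uniformly_continuous_on_def by blast
    show "\<exists>d>0. \<forall>s\<in>{a..b}. \<forall>t\<in>{a..b}. \<bar>s - t\<bar> < d \<longrightarrow> \<bar>H s - H t\<bar> \<le> 1 / (real n + 1)"
    proof (intro exI conjI ballI impI)
      fix s t assume "s \<in> {a..b}" "t \<in> {a..b}" "\<bar>s - t\<bar> < d"
      then show "\<bar>H s - H t\<bar> \<le> 1 / (real n + 1)" using d(2) by (force simp: dist_real_def)
    qed (use d in auto)
  qed
  then obtain dd where dd: "\<And>n. dd n > 0"
    "\<And>n s t. s \<in> {a..b} \<Longrightarrow> t \<in> {a..b} \<Longrightarrow> \<bar>s - t\<bar> < dd n \<Longrightarrow> \<bar>H s - H t\<bar> \<le> 1 / (real n + 1)"
    by metis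
  define D where "D n = Min (dd ` {..n})" for n
  have D0: "D n > 0" for n unfolding D_def by (subst Min_gr_iff) (auto simp: dd(1))
  have Ddd: "D n \<le> dd n" for n unfolding D_def by (rule Min_le) auto
  have Dmono: "n \<le> m \<Longrightarrow> D m \<le> D n" for n m unfolding D_def
    by (rule Min_antimono) auto
  have DH: "\<And>n s t. s \<in> {a..b} \<Longrightarrow> t \<in> {a..b} \<Longrightarrow> \<bar>s - t\<bar> < D n \<Longrightarrow> \<bar>H s - H t\<bar> \<le> 1 / (real n + 1)"
    using dd(2) Ddd by (meson less_le_trans)
  have "\<forall>n. \<exists>p. p tagged_division_of {a..b} \<and> (\<lambda>t. ball t (D n / 2)) fine p"
  proof
    fix n
    have "gauge (\<lambda>t. ball t (D n / 2))" using D0[of n] by (intro gauge_ball) simp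
    then obtain p where "p tagged_division_of {a..b}" "(\<lambda>t. ball t (D n / 2)) fine p"
      by (rule fine_division_exists_real)
    then show "\<exists>p. p tagged_division_of {a..b} \<and> (\<lambda>t. ball t (D n / 2)) fine p"
      by (intro exI conjI)
  qed
  then obtain P where P: "\<And>n. P n tagged_division_of {a..b}" "\<And>n. (\<lambda>t. ball t (D n / 2)) fine P n"
    by metis
  define V where "V = variation g"
  have V0: "V \<ge> 0" unfolding V_def by (rule variation_nonneg[OF g])
  have key: "\<bar>RS H g p - RS H g (P n)\<bar> \<le> 1 / (real n + 1) * V"
    if "p tagged_division_of {a..b}" "(\<lambda>t. ball t (D n / 2)) fine p" for p n
    unfolding V_def
    by (rule RS_diff[OF that(1) P(1) that(2) P(2) DH]) (auto simp: g)
  have key2: "\<bar>RS H g (P m) - RS H g (P n)\<bar> \<le> 1 / (real n + 1) * V" if "n \<le> m" for n m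
  proof (rule key[OF P(1)])
    show "(\<lambda>t. ball t (D n / 2)) fine P m"
      by (rule fine_mono[OF P(2)[of m]]) (use Dmono[OF that] in auto)
  qed
  define X where "X n = RS H g (P n)" for n
  have "Cauchy X"
  proof (rule CauchyI)
    fix e :: real assume e: "e > 0"
    define M where "M = nat \<lceil>V / e\<rceil>"
    have M: "V / (real M + 1) < e"
    proof -
      have "V / e < real M + 1" unfolding M_def by linarith
      then have "V < e * (real M + 1)" using e by (simp add: divide_less_eq mult.commute)
      then show ?thesis by (simp add: divide_less_eq)
    qed
    show "\<exists>M. \<forall>m\<ge>M. \<forall>n\<ge>M. norm (X m - X n) < e"
    proof (intro exI allI impI)
      fix m n assume mn: "M \<le> m" "M \<le> n"
      have b: "V / (real k + 1) \<le> V / (real M + 1)" if "M \<le> k" for k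
        using that V0 by (intro divide_left_mono) auto
      show "norm (X m - X n) < e"
      proof (cases "n \<le> m")
        case True
        then have "\<bar>X m - X n\<bar> \<le> V / (real n + 1)" using key2[OF True] by (simp add: X_def)
        then show ?thesis using b[OF mn(2)] M by simp
      next
        case False
        then have "\<bar>X n - X m\<bar> \<le> V / (real m + 1)" using key2[of m n] by (simp add: X_def)
        then show ?thesis using b[OF mn(1)] M by (simp add: abs_minus_commute)
      qed
    qed
  qed
  then obtain I where I: "X \<longlonglongrightarrow> I" using Cauchy_convergent_iff convergent_def by blast
  have XI: "\<bar>X n - I\<bar> \<le> V / (real n + 1)" for n
  proof (rule tendsto_upperbound)
    show "((\<lambda>m. \<bar>X n - X m\<bar>) \<longlongrightarrow> \<bar>X n - I\<bar>) sequentially" by (intro tendsto_intros I)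
    show "\<forall>\<^sub>F m in sequentially. \<bar>X n - X m\<bar> \<le> V / (real n + 1)"
      unfolding eventually_sequentially
    proof (intro exI[of _ n] allI impI)
      fix m assume "n \<le> m"
      from key2[OF this] have "\<bar>X m - X n\<bar> \<le> V / (real n + 1)" by (simp add: X_def)
      then show "\<bar>X n - X m\<bar> \<le> V / (real n + 1)" by (simp add: abs_minus_commute)
    qed
  qed simp
  show ?thesis
  proof (rule exI[of _ I], intro allI impI)
    fix e :: real assume e: "e > 0"
    define n where "n = nat \<lceil>2 * V / e\<rceil>"
    have n: "2 * V / (real n + 1) \<le> e"
    proof -
      have "2 * V / e < real n + 1" unfolding n_def by linarith
      then have "2 * V < e * (real n + 1)" using e by (simp add: divide_less_eq mult.commute)
      then show ?thesis by (simp add: divide_le_eq)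
    qed
    show "\<exists>\<delta>>0. \<forall>p. p tagged_division_of {a..b} \<and> (\<lambda>t. ball t \<delta>) fine p \<longrightarrow> \<bar>RS H g p - I\<bar> \<le> e"
    proof (intro exI conjI allI impI)
      show "D n / 2 > 0" using D0[of n] by simp
      fix p assume p: "p tagged_division_of {a..b} \<and> (\<lambda>t. ball t (D n / 2)) fine p"
      have "\<bar>RS H g p - X n\<bar> \<le> V / (real n + 1)" using key[of p n] p by (simp add: X_def)
      then show "\<bar>RS H g p - I\<bar> \<le> e" using XI[of n] n by (simp add: field_simps; linarith)
    qed
  qed
qed


lemma hs_on_exists:
  assumes "a \<le> b" "continuous_on {a..b} H" "g \<in> BV"
  shows "\<exists>I. hs_has_integral_on H g I a b"
proof -
  obtain I where I: "\<forall>e>0. \<exists>\<delta>>0. \<forall>p. p tagged_division_of {a..b} \<and> (\<lambda>t. ball t \<delta>) fine p \<longrightarrow> \<bar>RS H g p - I\<bar> \<le> e"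
    using RS_exists[OF assms] by blast
  have "hs_has_integral_on H g I a b"
    unfolding hs_on_iff
  proof (intro allI impI)
    fix e :: real assume e: "e > 0"
    then obtain \<delta> where d: "\<delta> > 0" "\<forall>p. p tagged_division_of {a..b} \<and> (\<lambda>t. ball t \<delta>) fine p \<longrightarrow> \<bar>RS H g p - I\<bar> \<le> e/2"
      using I[rule_format, of "e/2"] by auto
    show "\<exists>\<gamma>. gauge \<gamma> \<and> (\<forall>p. p tagged_division_of {a..b} \<and> \<gamma> fine p \<longrightarrow> \<bar>RS H g p - I\<bar> < e)"
    proof (intro exI conjI allI impI)
      show "gauge (\<lambda>t. ball t \<delta>)" using d(1) by (rule gauge_ball)
      fix p assume "p tagged_division_of {a..b} \<and> (\<lambda>t. ball t \<delta>) fine p"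
      then have "\<bar>RS H g p - I\<bar> \<le> e/2" using d(2) by blast
      then show "\<bar>RS H g p - I\<bar> < e" using e by simp
    qed
  qed
  then show ?thesis by blast
qed

lemma hs_on_common:
  assumes "hs_has_integral_on H1 g1 I1 a b" "hs_has_integral_on H2 g2 I2 a b" "e > 0"
  obtains \<gamma> where "gauge \<gamma>"
    "\<And>p. p tagged_division_of {a..b} \<Longrightarrow> \<gamma> fine p \<Longrightarrow> \<bar>RS H1 g1 p - I1\<bar> < e \<and> \<bar>RS H2 g2 p - I2\<bar> < e"
proof -
  obtain \<gamma>1 where g1: "gauge \<gamma>1" "\<forall>p. p tagged_division_of {a..b} \<and> \<gamma>1 fine p \<longrightarrow> \<bar>RS H1 g1 p - I1\<bar> < e"
    using assms(1)[unfolded hs_on_iff, rule_format, OF assms(3)] by blast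
  obtain \<gamma>2 where g2: "gauge \<gamma>2" "\<forall>p. p tagged_division_of {a..b} \<and> \<gamma>2 fine p \<longrightarrow> \<bar>RS H2 g2 p - I2\<bar> < e"
    using assms(2)[unfolded hs_on_iff, rule_format, OF assms(3)] by blast
  show ?thesis
  proof (rule that[of "\<lambda>x. \<gamma>1 x \<inter> \<gamma>2 x"])
    show "gauge (\<lambda>x. \<gamma>1 x \<inter> \<gamma>2 x)" using g1(1) g2(1) by (rule gauge_Int)
    fix p assume "p tagged_division_of {a..b}" "(\<lambda>x. \<gamma>1 x \<inter> \<gamma>2 x) fine p"
    then show "\<bar>RS H1 g1 p - I1\<bar> < e \<and> \<bar>RS H2 g2 p - I2\<bar> < e"
      using g1(2) g2(2) unfolding fine_Int by blast
  qed
qed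

lemma hs_on_unique:
  assumes "hs_has_integral_on H g I a b" "hs_has_integral_on H g J a b"
  shows "I = J"
proof (rule ccontr)
  assume ne: "I \<noteq> J"
  define e where "e = \<bar>I - J\<bar> / 2"
  have e: "e > 0" using ne by (simp add: e_def)
  obtain \<gamma> where G: "gauge \<gamma>"
    "\<And>p. p tagged_division_of {a..b} \<Longrightarrow> \<gamma> fine p \<Longrightarrow> \<bar>RS H g p - I\<bar> < e \<and> \<bar>RS H g p - J\<bar> < e"
    using hs_on_common[OF assms e] by blast
  obtain p where "p tagged_division_of {a..b}" "\<gamma> fine p" using G(1) by (rule fine_division_exists_real)
  from G(2)[OF this] have "\<bar>I - J\<bar> < 2 * e" by linarith
  then show False by (simp add: e_def)
qed

lemma hs_on_bound:
  assumes I: "hs_has_integral_on H g I a b" and r: "r > 0"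
    and C: "\<And>p. p tagged_division_of {a..b} \<Longrightarrow> (\<lambda>t. ball t r) fine p \<Longrightarrow> \<bar>RS H g p\<bar> \<le> C"
  shows "\<bar>I\<bar> \<le> C"
proof (rule field_le_epsilon)
  fix e :: real assume e: "e > 0"
  obtain \<gamma> where g: "gauge \<gamma>" "\<forall>p. p tagged_division_of {a..b} \<and> \<gamma> fine p \<longrightarrow> \<bar>RS H g p - I\<bar> < e"
    using I[unfolded hs_on_iff, rule_format, OF e] by blast
  have "gauge (\<lambda>x. \<gamma> x \<inter> ball x r)" using g(1) gauge_ball[OF r] by (rule gauge_Int)
  then obtain p where p: "p tagged_division_of {a..b}" "(\<lambda>x. \<gamma> x \<inter> ball x r) fine p"
    by (rule fine_division_exists_real)
  then have "\<gamma> fine p" "(\<lambda>t. ball t r) fine p" unfolding fine_Int by auto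
  then have "\<bar>RS H g p - I\<bar> < e" "\<bar>RS H g p\<bar> \<le> C" using g(2) p(1) C by blast+
  then show "\<bar>I\<bar> \<le> C + e" by linarith
qed

lemma hs_on_lin:
  assumes I1: "hs_has_integral_on H1 g1 I1 a b" and I2: "hs_has_integral_on H2 g2 I2 a b"
    and R: "\<And>p. p tagged_division_of {a..b} \<Longrightarrow> RS H3 g3 p = \<alpha> * RS H1 g1 p + \<beta> * RS H2 g2 p"
  shows "hs_has_integral_on H3 g3 (\<alpha> * I1 + \<beta> * I2) a b"
  unfolding hs_on_iff
proof (intro allI impI)
  fix e :: real assume e: "e > 0"
  define e' where "e' = e / (\<bar>\<alpha>\<bar> + \<bar>\<beta>\<bar> + 1)"
  have e': "e' > 0" using e by (simp add: e'_def add_pos_nonneg)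
  have e'': "(\<bar>\<alpha>\<bar> + \<bar>\<beta>\<bar>) * e' < e"
  proof -
    have "(\<bar>\<alpha>\<bar> + \<bar>\<beta>\<bar> + 1) * e' = e" unfolding e'_def by (simp add: add_pos_nonneg)
    then show ?thesis using e' by (simp add: algebra_simps)
  qed
  obtain \<gamma> where G: "gauge \<gamma>"
    "\<And>p. p tagged_division_of {a..b} \<Longrightarrow> \<gamma> fine p \<Longrightarrow> \<bar>RS H1 g1 p - I1\<bar> < e' \<and> \<bar>RS H2 g2 p - I2\<bar> < e'"
    using hs_on_common[OF I1 I2 e'] by blast
  show "\<exists>\<gamma>. gauge \<gamma> \<and> (\<forall>p. p tagged_division_of {a..b} \<and> \<gamma> fine p \<longrightarrow> \<bar>RS H3 g3 p - (\<alpha> * I1 + \<beta> * I2)\<bar> < e)"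
  proof (intro exI conjI allI impI)
    show "gauge \<gamma>" by (rule G(1))
    fix p assume p: "p tagged_division_of {a..b} \<and> \<gamma> fine p"
    then have b: "\<bar>RS H1 g1 p - I1\<bar> < e'" "\<bar>RS H2 g2 p - I2\<bar> < e'" using G(2) by blast+
    have "RS H3 g3 p - (\<alpha> * I1 + \<beta> * I2) = \<alpha> * (RS H1 g1 p - I1) + \<beta> * (RS H2 g2 p - I2)"
      using R p by (simp add: algebra_simps)
    also have "\<bar>\<dots>\<bar> \<le> \<bar>\<alpha>\<bar> * \<bar>RS H1 g1 p - I1\<bar> + \<bar>\<beta>\<bar> * \<bar>RS H2 g2 p - I2\<bar>"
      by (metis abs_mult abs_triangle_ineq)
    also have "\<dots> \<le> \<bar>\<alpha>\<bar> * e' + \<bar>\<beta>\<bar> * e'"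
      using b by (intro add_mono mult_left_mono) auto
    finally show "\<bar>RS H3 g3 p - (\<alpha> * I1 + \<beta> * I2)\<bar> < e" using e'' by (simp add: algebra_simps)
  qed
qed

lemma hs_on_add:
  assumes ac: "a \<le> c" and cb: "c \<le> b"
    and I: "hs_has_integral_on H g I a b" and I1: "hs_has_integral_on H g I1 a c"
    and I2: "hs_has_integral_on H g I2 c b"
  shows "I = I1 + I2"
proof (rule ccontr)
  assume ne: "I \<noteq> I1 + I2"
  define e where "e = \<bar>I - (I1 + I2)\<bar> / 3"
  have e: "e > 0" using ne by (simp add: e_def)
  obtain \<gamma> where g: "gauge \<gamma>" "\<forall>p. p tagged_division_of {a..b} \<and> \<gamma> fine p \<longrightarrow> \<bar>RS H g p - I\<bar> < e"
    using I[unfolded hs_on_iff, rule_format, OF e] by blast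
  obtain \<gamma>1 where g1: "gauge \<gamma>1" "\<forall>p. p tagged_division_of {a..c} \<and> \<gamma>1 fine p \<longrightarrow> \<bar>RS H g p - I1\<bar> < e"
    using I1[unfolded hs_on_iff, rule_format, OF e] by blast
  obtain \<gamma>2 where g2: "gauge \<gamma>2" "\<forall>p. p tagged_division_of {c..b} \<and> \<gamma>2 fine p \<longrightarrow> \<bar>RS H g p - I2\<bar> < e"
    using I2[unfolded hs_on_iff, rule_format, OF e] by blast
  define \<gamma>' where "\<gamma>' = (\<lambda>x. \<gamma> x \<inter> (\<gamma>1 x \<inter> \<gamma>2 x))"
  have G: "gauge \<gamma>'" unfolding \<gamma>'_def using g(1) g1(1) g2(1) by (intro gauge_Int)
  obtain p1 where p1: "p1 tagged_division_of {a..c}" "\<gamma>' fine p1" using G by (rule fine_division_exists_real)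
  obtain p2 where p2: "p2 tagged_division_of {c..b}" "\<gamma>' fine p2" using G by (rule fine_division_exists_real)
  have s1: "{a..b} \<inter> {x. x \<bullet> 1 \<le> c} = {a..c}" using cb by auto
  have s2: "{a..b} \<inter> {x. x \<bullet> 1 \<ge> c} = {c..b}" using ac by auto
  have p: "(p1 \<union> p2) tagged_division_of {a..b}"
    by (rule tagged_division_Un_interval_real[of p1 a b 1 c p2]) (use p1(1) p2(1) s1 s2 in auto)
  have fp: "\<gamma>' fine (p1 \<union> p2)" using p1(2) p2(2) by (rule fine_Un)
  have f0: "\<gamma> fine (p1 \<union> p2) \<and> (\<gamma>1 fine (p1 \<union> p2) \<and> \<gamma>2 fine (p1 \<union> p2))" using fp unfolding \<gamma>'_def fine_Int .
  have f1: "\<gamma> fine p1 \<and> (\<gamma>1 fine p1 \<and> \<gamma>2 fine p1)" using p1(2) unfolding \<gamma>'_def fine_Int .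
  have f2: "\<gamma> fine p2 \<and> (\<gamma>1 fine p2 \<and> \<gamma>2 fine p2)" using p2(2) unfolding \<gamma>'_def fine_Int .
  from f0 f1 f2 have "\<gamma> fine (p1 \<union> p2)" "\<gamma>1 fine p1" "\<gamma>2 fine p2" by simp_all
  then have b: "\<bar>RS H g (p1 \<union> p2) - I\<bar> < e" "\<bar>RS H g p1 - I1\<bar> < e" "\<bar>RS H g p2 - I2\<bar> < e"
    using g(2)[rule_format, of "p1 \<union> p2"] g1(2)[rule_format, of p1] g2(2)[rule_format, of p2] p p1(1) p2(1)
    by simp_all
  have "RS H g (p1 \<union> p2) = RS H g p1 + RS H g p2"
    unfolding RS_fs[OF p] RS_fs[OF p1(1)] RS_fs[OF p2(1)]
  proof (rule sum.union_inter_neutral)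
    show "finite p1" using tagged_division_ofD(1)[OF p1(1)] .
    show "finite p2" using tagged_division_ofD(1)[OF p2(1)] .
    show "\<forall>u\<in>p1 \<inter> p2. H (fst u) * Dl g (snd u) = 0"
    proof
      fix u assume u: "u \<in> p1 \<inter> p2"
      then have u1: "(fst u, snd u) \<in> p1" and u2: "(fst u, snd u) \<in> p2" by auto
      have "snd u \<subseteq> {a..c}" using td_sub[OF p1(1) u1] .
      moreover have "snd u \<subseteq> {c..b}" using td_sub[OF p2(1) u2] .
      moreover obtain c' d' where "c' \<le> d'" "snd u = {c'..d'}" using td_ivl[OF p1(1) u1] by blast
      ultimately have "snd u = {c..c}" by auto
      then show "H (fst u) * Dl g (snd u) = 0" using Dl_degen[of c c g] by simp
    qed
  qed
  then have "\<bar>I - (I1 + I2)\<bar> < 3 * e" using b by linarith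
  then show False by (simp add: e_def)
qed




definition JJ :: "(real \<Rightarrow> real) \<Rightarrow> (real \<Rightarrow> real) \<Rightarrow> real \<Rightarrow> real \<Rightarrow> real" where
  "JJ H g a b = (THE I. hs_has_integral_on H g I a b)"

lemma JJ_eq: "hs_has_integral_on H g I a b \<Longrightarrow> JJ H g a b = I"
  unfolding JJ_def by (rule the_equality) (auto intro: hs_on_unique)

lemma JJ:
  assumes "a \<le> b" "continuous_on UNIV H" "g \<in> BV"
  shows "hs_has_integral_on H g (JJ H g a b) a b"
proof -
  have "continuous_on {a..b} H" using assms(2) continuous_on_subset by blast
  then obtain I where "hs_has_integral_on H g I a b" using hs_on_exists assms(1,3) by blast
  then show ?thesis using JJ_eq by simp
qed

lemma JJ_add:
  assumes "a \<le> c" "c \<le> b" "continuous_on UNIV H" "g \<in> BV"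
  shows "JJ H g a b = JJ H g a c + JJ H g c b"
  using hs_on_add[OF assms(1,2) JJ[OF _ assms(3,4)] JJ[OF assms(1) assms(3,4)] JJ[OF assms(2) assms(3,4)]] assms(1,2)
  by simp

lemma JJ_bound_fam:
  assumes ab: "a \<le> b" and H: "continuous_on UNIV H" and g: "g \<in> BV"
    and HB: "\<And>t. t \<in> {a..b} \<Longrightarrow> \<bar>H t\<bar> \<le> B" and B0: "0 \<le> B"
    and W: "\<And>(S::(real \<times> real set) set) x y. dfam S x y \<Longrightarrow> (\<forall>i\<in>S. a \<le> x i \<and> y i \<le> b) \<Longrightarrow>
             (\<Sum>i\<in>S. \<bar>g (y i) - g (x i)\<bar>) \<le> W"
  shows "\<bar>JJ H g a b\<bar> \<le> B * W"
proof (rule hs_on_bound[OF JJ[OF ab H g], of 1])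
  fix p assume "p tagged_division_of {a..b}"
  then show "\<bar>RS H g p\<bar> \<le> B * W" by (rule RS_bound_fam[OF _ HB B0 W])
qed simp

lemma JJ_bound_var:
  assumes ab: "a \<le> b" and H: "continuous_on UNIV H" and g: "g \<in> BV"
    and HB: "\<And>t. t \<in> {a..b} \<Longrightarrow> \<bar>H t\<bar> \<le> B" and B0: "0 \<le> B"
  shows "\<bar>JJ H g a b\<bar> \<le> B * variation g"
proof (rule JJ_bound_fam[OF ab H g HB B0])
  fix S :: "(real \<times> real set) set" and x y assume "dfam S x y"
  then show "(\<Sum>i\<in>S. \<bar>g (y i) - g (x i)\<bar>) \<le> variation g" by (rule dfam_le_var[OF g])
qed

lemma JJ_bound_split:
  assumes ab: "a \<le> b" and H: "continuous_on UNIV H" and g: "g \<in> BV" and r: "r > 0"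
    and HB: "\<And>t. \<bar>H t\<bar> \<le> B"
    and HB1: "\<And>t. m - r \<le> t \<Longrightarrow> t \<le> M + r \<Longrightarrow> \<bar>H t\<bar> \<le> B1"
    and B0: "0 \<le> B" and B10: "0 \<le> B1"
    and T: "\<And>(S::(real \<times> real set) set) x y. dfam S x y \<Longrightarrow> (\<forall>i\<in>S. y i \<le> m \<or> M \<le> x i) \<Longrightarrow>
             (\<Sum>i\<in>S. \<bar>g (y i) - g (x i)\<bar>) \<le> T"
  shows "\<bar>JJ H g a b\<bar> \<le> B1 * variation g + B * T"
proof (rule hs_on_bound[OF JJ[OF ab H g] r])
  fix p assume "p tagged_division_of {a..b}" "(\<lambda>t. ball t r) fine p"
  then show "\<bar>RS H g p\<bar> \<le> B1 * variation g + B * T"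
    by (rule RS_bound_split[OF _ _ _ _ B0 B10 g T]) (auto simp: HB HB1)
qed

lemma ABF_nbot: "(at_bot \<times>\<^sub>F at_top :: (real \<times> real) filter) \<noteq> bot"
  by (simp add: prod_filter_eq_bot)

lemma ev_ABF: "eventually (\<lambda>x. fst x \<le> m \<and> M \<le> snd x) (at_bot \<times>\<^sub>F at_top :: (real \<times> real) filter)"
  by (rule eventually_prodI) (simp_all add: eventually_le_at_bot eventually_ge_at_top)

lemma WL_tendsto:
  assumes H: "continuous_on UNIV H" and HB: "\<And>t. \<bar>H t\<bar> \<le> B" and g: "g \<in> BV"
  shows "\<exists>I. ((\<lambda>(a,b). JJ H g a b) \<longlongrightarrow> I) (at_bot \<times>\<^sub>F at_top)"
proof -
  have B0: "0 \<le> B" using HB[of 0] by linarith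
  have key: "\<exists>m M. m \<le> M \<and> (\<forall>a b. a \<le> m \<longrightarrow> M \<le> b \<longrightarrow> \<bar>JJ H g a b - JJ H g m M\<bar> \<le> 2 * B * \<epsilon>)"
    if e: "\<epsilon> > 0" for \<epsilon>
  proof -
    obtain m M where mM: "m \<le> M"
      "\<And>(S::(real \<times> real set) set) x y. dfam S x y \<Longrightarrow> (\<forall>i\<in>S. y i \<le> m \<or> M \<le> x i) \<Longrightarrow>
        (\<Sum>i\<in>S. \<bar>g (y i) - g (x i)\<bar>) \<le> \<epsilon>"
      using BV_tail[OF g e] by blast
    have "\<bar>JJ H g a b - JJ H g m M\<bar> \<le> 2 * B * \<epsilon>" if ab: "a \<le> m" "M \<le> b" for a b
    proof -
      have s: "JJ H g a b = JJ H g a m + (JJ H g m M + JJ H g M b)"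
        using JJ_add[OF ab(1) _ H g, of b] JJ_add[OF mM(1) _ H g, of b] ab mM(1) by simp
      have 1: "\<bar>JJ H g a m\<bar> \<le> B * \<epsilon>"
      proof (rule JJ_bound_fam[OF ab(1) H g HB B0])
        fix S :: "(real \<times> real set) set" and x y assume "dfam S x y" "\<forall>i\<in>S. a \<le> x i \<and> y i \<le> m"
        then show "(\<Sum>i\<in>S. \<bar>g (y i) - g (x i)\<bar>) \<le> \<epsilon>" using mM(2) by blast
      qed
      have 2: "\<bar>JJ H g M b\<bar> \<le> B * \<epsilon>"
      proof (rule JJ_bound_fam[OF ab(2) H g HB B0])
        fix S :: "(real \<times> real set) set" and x y assume "dfam S x y" "\<forall>i\<in>S. M \<le> x i \<and> y i \<le> b"
        then show "(\<Sum>i\<in>S. \<bar>g (y i) - g (x i)\<bar>) \<le> \<epsilon>" using mM(2) by blast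
      qed
      show ?thesis using s 1 2 by linarith
    qed
    then show ?thesis using mM(1) by blast
  qed
  define u where "u n = JJ H g (- real n) (real n)" for n
  have ev: "\<exists>m M. m \<le> M \<and> (\<forall>n. max \<bar>m\<bar> \<bar>M\<bar> \<le> real n \<longrightarrow> \<bar>u n - JJ H g m M\<bar> \<le> 2 * B * \<epsilon>)
        \<and> (\<forall>a b. a \<le> m \<longrightarrow> M \<le> b \<longrightarrow> \<bar>JJ H g a b - JJ H g m M\<bar> \<le> 2 * B * \<epsilon>)"
    if e: "\<epsilon> > 0" for \<epsilon>
  proof -
    obtain m M where mM: "m \<le> M" "\<forall>a b. a \<le> m \<longrightarrow> M \<le> b \<longrightarrow> \<bar>JJ H g a b - JJ H g m M\<bar> \<le> 2 * B * \<epsilon>"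
      using key[OF e] by blast
    have "\<forall>n. max \<bar>m\<bar> \<bar>M\<bar> \<le> real n \<longrightarrow> \<bar>u n - JJ H g m M\<bar> \<le> 2 * B * \<epsilon>"
    proof (intro allI impI)
      fix n assume "max \<bar>m\<bar> \<bar>M\<bar> \<le> real n"
      then have "- real n \<le> m" "M \<le> real n" by linarith+
      then show "\<bar>u n - JJ H g m M\<bar> \<le> 2 * B * \<epsilon>" using mM(2) by (simp add: u_def)
    qed
    then show ?thesis using mM by blast
  qed
  have "Cauchy u"
  proof (rule CauchyI)
    fix e :: real assume e: "e > 0"
    define \<epsilon> where "\<epsilon> = e / (4 * B + 1)"
    have e1: "\<epsilon> > 0" using e B0 by (simp add: \<epsilon>_def)
    have e2: "4 * B * \<epsilon> < e"
    proof -
      have "(4 * B + 1) * \<epsilon> = e" using B0 by (simp add: \<epsilon>_def)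
      then show ?thesis using e1 by (simp add: algebra_simps)
    qed
    obtain m M where mM: "\<forall>n. max \<bar>m\<bar> \<bar>M\<bar> \<le> real n \<longrightarrow> \<bar>u n - JJ H g m M\<bar> \<le> 2 * B * \<epsilon>"
      using ev[OF e1] by blast
    show "\<exists>N. \<forall>m\<ge>N. \<forall>n\<ge>N. norm (u m - u n) < e"
    proof (intro exI allI impI)
      fix k n assume "nat \<lceil>max \<bar>m\<bar> \<bar>M\<bar>\<rceil> \<le> k" "nat \<lceil>max \<bar>m\<bar> \<bar>M\<bar>\<rceil> \<le> n"
      then have "max \<bar>m\<bar> \<bar>M\<bar> \<le> real k" "max \<bar>m\<bar> \<bar>M\<bar> \<le> real n" by linarith+
      then have "\<bar>u k - JJ H g m M\<bar> \<le> 2 * B * \<epsilon>" "\<bar>u n - JJ H g m M\<bar> \<le> 2 * B * \<epsilon>" using mM by blast+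
      then show "norm (u k - u n) < e" using e2 by simp
    qed
  qed
  then obtain I where I: "u \<longlonglongrightarrow> I" using Cauchy_convergent_iff convergent_def by blast
  have "((\<lambda>(a,b). JJ H g a b) \<longlongrightarrow> I) (at_bot \<times>\<^sub>F at_top)"
  proof (rule tendstoI)
    fix e :: real assume e: "e > 0"
    define \<epsilon> where "\<epsilon> = e / (4 * B + 1)"
    have e1: "\<epsilon> > 0" using e B0 by (simp add: \<epsilon>_def)
    have e2: "4 * B * \<epsilon> < e"
    proof -
      have "(4 * B + 1) * \<epsilon> = e" using B0 by (simp add: \<epsilon>_def)
      then show ?thesis using e1 by (simp add: algebra_simps)
    qed
    obtain m M where mM: "\<forall>n. max \<bar>m\<bar> \<bar>M\<bar> \<le> real n \<longrightarrow> \<bar>u n - JJ H g m M\<bar> \<le> 2 * B * \<epsilon>"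
      "\<forall>a b. a \<le> m \<longrightarrow> M \<le> b \<longrightarrow> \<bar>JJ H g a b - JJ H g m M\<bar> \<le> 2 * B * \<epsilon>"
      using ev[OF e1] by blast
    have IJ: "\<bar>I - JJ H g m M\<bar> \<le> 2 * B * \<epsilon>"
    proof (rule tendsto_upperbound)
      show "((\<lambda>n. \<bar>u n - JJ H g m M\<bar>) \<longlongrightarrow> \<bar>I - JJ H g m M\<bar>) sequentially" by (intro tendsto_intros I)
      show "\<forall>\<^sub>F n in sequentially. \<bar>u n - JJ H g m M\<bar> \<le> 2 * B * \<epsilon>"
        unfolding eventually_sequentially
      proof (rule exI[of _ "nat \<lceil>max \<bar>m\<bar> \<bar>M\<bar>\<rceil>"], intro allI impI)
        fix n assume "nat \<lceil>max \<bar>m\<bar> \<bar>M\<bar>\<rceil> \<le> n"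
        then have "max \<bar>m\<bar> \<bar>M\<bar> \<le> real n" by linarith
        then show "\<bar>u n - JJ H g m M\<bar> \<le> 2 * B * \<epsilon>" using mM(1) by blast
      qed
    qed simp
    show "\<forall>\<^sub>F x in at_bot \<times>\<^sub>F at_top. dist ((\<lambda>(a,b). JJ H g a b) x) I < e"
    proof (rule eventually_mono[OF ev_ABF[of m M]])
      fix x :: "real \<times> real" assume "fst x \<le> m \<and> M \<le> snd x"
      then have "\<bar>JJ H g (fst x) (snd x) - JJ H g m M\<bar> \<le> 2 * B * \<epsilon>" using mM(2) by blast
      then show "dist ((\<lambda>(a,b). JJ H g a b) x) I < e" using IJ e2
        by (simp add: case_prod_unfold dist_real_def)
    qed
  qed
  then show ?thesis by blast
qed

lemma WL:
  assumes H: "continuous_on UNIV H" and HB: "\<And>t. \<bar>H t\<bar> \<le> B" and g: "g \<in> BV"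
  shows "((\<lambda>(a,b). JJ H g a b) \<longlongrightarrow> hs_integral H g) (at_bot \<times>\<^sub>F at_top)"
proof -
  obtain I where I: "((\<lambda>(a,b). JJ H g a b) \<longlongrightarrow> I) (at_bot \<times>\<^sub>F at_top)"
    using WL_tendsto[OF H HB g] by blast
  have hI: "hs_has_integral H g I"
    unfolding hs_has_integral_def
    by (rule exI[of _ "JJ H g"]) (use I JJ[OF _ H g] in auto)
  have "hs_integral H g = I"
    unfolding hs_integral_def
  proof (rule the_equality[where P="\<lambda>I. hs_has_integral H g I", OF hI])
    fix I' assume "hs_has_integral H g I'"
    then obtain J where J: "\<forall>a b. a \<le> b \<longrightarrow> hs_has_integral_on H g (J a b) a b"
      "((\<lambda>(a,b). J a b) \<longlongrightarrow> I') (at_bot \<times>\<^sub>F at_top)"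
      unfolding hs_has_integral_def by blast
    have "eventually (\<lambda>x. (\<lambda>(a,b). J a b) x = (\<lambda>(a,b). JJ H g a b) x) (at_bot \<times>\<^sub>F at_top)"
    proof (rule eventually_mono[OF ev_ABF[of 0 0]])
      fix x :: "real \<times> real" assume "fst x \<le> 0 \<and> 0 \<le> snd x"
      then have "fst x \<le> snd x" by linarith
      then show "(\<lambda>(a,b). J a b) x = (\<lambda>(a,b). JJ H g a b) x"
        using JJ_eq[OF J(1)[rule_format, OF \<open>fst x \<le> snd x\<close>]] by (simp add: case_prod_unfold)
    qed
    then have "((\<lambda>(a,b). JJ H g a b) \<longlongrightarrow> I') (at_bot \<times>\<^sub>F at_top)"
      using J(2) by (rule tendsto_cong[THEN iffD1])
    then show "I' = I" using tendsto_unique[OF ABF_nbot _ I] by blast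
  qed
  then show ?thesis using I by simp
qed


lemma WL_bound:
  assumes H: "continuous_on UNIV H" and HB: "\<And>t. \<bar>H t\<bar> \<le> B" and g: "g \<in> BV"
  shows "\<bar>hs_integral H g\<bar> \<le> B * variation g"
proof (rule tendsto_upperbound)
  show "((\<lambda>x. \<bar>(\<lambda>(a,b). JJ H g a b) x\<bar>) \<longlongrightarrow> \<bar>hs_integral H g\<bar>) (at_bot \<times>\<^sub>F at_top)"
    by (intro tendsto_intros WL[OF H HB g])
  have B0: "0 \<le> B" using HB[of 0] by linarith
  show "\<forall>\<^sub>F x in at_bot \<times>\<^sub>F at_top. \<bar>(\<lambda>(a,b). JJ H g a b) x\<bar> \<le> B * variation g"
  proof (rule eventually_mono[OF ev_ABF[of 0 0]])
    fix x :: "real \<times> real" assume "fst x \<le> 0 \<and> 0 \<le> snd x"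
    then have "fst x \<le> snd x" by linarith
    from JJ_bound_var[OF this H g HB B0] show "\<bar>(\<lambda>(a,b). JJ H g a b) x\<bar> \<le> B * variation g"
      by (simp add: case_prod_unfold)
  qed
qed (rule ABF_nbot)

lemma WL_bound_split:
  assumes H: "continuous_on UNIV H" and g: "g \<in> BV" and r: "r > 0"
    and HB: "\<And>t. \<bar>H t\<bar> \<le> B"
    and HB1: "\<And>t. m - r \<le> t \<Longrightarrow> t \<le> M + r \<Longrightarrow> \<bar>H t\<bar> \<le> B1"
    and B10: "0 \<le> B1"
    and T: "\<And>(S::(real \<times> real set) set) x y. dfam S x y \<Longrightarrow> (\<forall>i\<in>S. y i \<le> m \<or> M \<le> x i) \<Longrightarrow>
             (\<Sum>i\<in>S. \<bar>g (y i) - g (x i)\<bar>) \<le> T"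
  shows "\<bar>hs_integral H g\<bar> \<le> B1 * variation g + B * T"
proof (rule tendsto_upperbound)
  show "((\<lambda>x. \<bar>(\<lambda>(a,b). JJ H g a b) x\<bar>) \<longlongrightarrow> \<bar>hs_integral H g\<bar>) (at_bot \<times>\<^sub>F at_top)"
    by (intro tendsto_intros WL[OF H HB g])
  have B0: "0 \<le> B" using HB[of 0] by linarith
  show "\<forall>\<^sub>F x in at_bot \<times>\<^sub>F at_top. \<bar>(\<lambda>(a,b). JJ H g a b) x\<bar> \<le> B1 * variation g + B * T"
  proof (rule eventually_mono[OF ev_ABF[of 0 0]])
    fix x :: "real \<times> real" assume "fst x \<le> 0 \<and> 0 \<le> snd x"
    then have "fst x \<le> snd x" by linarith
    from JJ_bound_split[OF this H g r HB HB1 B0 B10 T]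
    show "\<bar>(\<lambda>(a,b). JJ H g a b) x\<bar> \<le> B1 * variation g + B * T"
      by (simp add: case_prod_unfold)
  qed
qed (rule ABF_nbot)

lemma RS_lin_H: "RS (\<lambda>t. \<alpha> * H1 t + \<beta> * H2 t) g p = \<alpha> * RS H1 g p + \<beta> * RS H2 g p"
  unfolding RS_def sum_distrib_left sum.distrib[symmetric] by (rule sum.cong) (auto simp: algebra_simps)

lemma RS_lin_g: "RS H (\<lambda>y. \<alpha> * g1 y + \<beta> * g2 y) p = \<alpha> * RS H g1 p + \<beta> * RS H g2 p"
  unfolding RS_def sum_distrib_left sum.distrib[symmetric] by (rule sum.cong) (auto simp: algebra_simps)

lemma BV_lin:
  assumes g: "g \<in> BV" and h: "h \<in> BV"
  shows "(\<lambda>y. \<alpha> * g y + \<beta> * h y) \<in> BV"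
proof -
  have "s \<le> \<bar>\<alpha>\<bar> * variation g + \<bar>\<beta>\<bar> * variation h" if sin: "s \<in> var_sums (\<lambda>y. \<alpha> * g y + \<beta> * h y)" for s
  proof -
    obtain n :: nat and x y where sd: "s = (\<Sum>i<n. \<bar>(\<alpha> * g (x i) + \<beta> * h (x i)) - (\<alpha> * g (y i) + \<beta> * h (y i))\<bar>)"
      and P: "(\<forall>i<n. x i < y i) \<and> (\<forall>i<n. \<forall>j<n. i \<noteq> j \<longrightarrow> {x i<..<y i} \<inter> {x j<..<y j} = {})"
      using sin apply (simp only: var_sums_def mem_Collect_eq)
      apply (elim exE conjE)
      by blast
    have mg: "(\<Sum>i<n. \<bar>g (x i) - g (y i)\<bar>) \<in> var_sums g" unfolding var_sums_def using P by blast
    have mh: "(\<Sum>i<n. \<bar>h (x i) - h (y i)\<bar>) \<in> var_sums h" unfolding var_sums_def using P by blast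
    have lg: "(\<Sum>i<n. \<bar>g (x i) - g (y i)\<bar>) \<le> variation g"
      unfolding variation_def by (rule cSup_upper[OF mg]) (use g in \<open>simp add: BV_def\<close>)
    have lh: "(\<Sum>i<n. \<bar>h (x i) - h (y i)\<bar>) \<le> variation h"
      unfolding variation_def by (rule cSup_upper[OF mh]) (use h in \<open>simp add: BV_def\<close>)
    have "s \<le> (\<Sum>i<n. \<bar>\<alpha>\<bar> * \<bar>g (x i) - g (y i)\<bar> + \<bar>\<beta>\<bar> * \<bar>h (x i) - h (y i)\<bar>)"
      unfolding sd
    proof (rule sum_mono)
      fix i
      have "(\<alpha> * g (x i) + \<beta> * h (x i)) - (\<alpha> * g (y i) + \<beta> * h (y i)) = \<alpha> * (g (x i) - g (y i)) + \<beta> * (h (x i) - h (y i))"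
        by (simp add: algebra_simps)
      then show "\<bar>(\<alpha> * g (x i) + \<beta> * h (x i)) - (\<alpha> * g (y i) + \<beta> * h (y i))\<bar> \<le> \<bar>\<alpha>\<bar> * \<bar>g (x i) - g (y i)\<bar> + \<bar>\<beta>\<bar> * \<bar>h (x i) - h (y i)\<bar>"
        by (metis abs_mult abs_triangle_ineq)
    qed
    also have "\<dots> = \<bar>\<alpha>\<bar> * (\<Sum>i<n. \<bar>g (x i) - g (y i)\<bar>) + \<bar>\<beta>\<bar> * (\<Sum>i<n. \<bar>h (x i) - h (y i)\<bar>)"
      by (simp add: sum.distrib sum_distrib_left)
    also have "\<dots> \<le> \<bar>\<alpha>\<bar> * variation g + \<bar>\<beta>\<bar> * variation h"
      using lg lh by (intro add_mono mult_left_mono) auto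
    finally show ?thesis .
  qed
  then show ?thesis unfolding BV_def bdd_above_def by blast
qed

lemma WL_lin_H:
  assumes H1: "continuous_on UNIV H1" and B1: "\<And>t. \<bar>H1 t\<bar> \<le> C1"
    and H2: "continuous_on UNIV H2" and B2: "\<And>t. \<bar>H2 t\<bar> \<le> C2" and g: "g \<in> BV"
  shows "hs_integral (\<lambda>t. \<alpha> * H1 t + \<beta> * H2 t) g = \<alpha> * hs_integral H1 g + \<beta> * hs_integral H2 g"
proof -
  let ?H = "\<lambda>t. \<alpha> * H1 t + \<beta> * H2 t"
  have H: "continuous_on UNIV ?H" using H1 H2 by (intro continuous_intros)
  have HB: "\<bar>?H t\<bar> \<le> \<bar>\<alpha>\<bar> * C1 + \<bar>\<beta>\<bar> * C2" for t
  proof -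
    have "\<bar>?H t\<bar> \<le> \<bar>\<alpha>\<bar> * \<bar>H1 t\<bar> + \<bar>\<beta>\<bar> * \<bar>H2 t\<bar>" by (metis abs_mult abs_triangle_ineq)
    also have "\<dots> \<le> \<bar>\<alpha>\<bar> * C1 + \<bar>\<beta>\<bar> * C2" using B1[of t] B2[of t] by (intro add_mono mult_left_mono) auto
    finally show ?thesis .
  qed
  have L: "((\<lambda>x. \<alpha> * (\<lambda>(a,b). JJ H1 g a b) x + \<beta> * (\<lambda>(a,b). JJ H2 g a b) x) \<longlongrightarrow>
      \<alpha> * hs_integral H1 g + \<beta> * hs_integral H2 g) (at_bot \<times>\<^sub>F at_top)"
    by (intro tendsto_add tendsto_mult_left WL[OF H1 B1 g] WL[OF H2 B2 g])
  have "eventually (\<lambda>x. \<alpha> * (\<lambda>(a,b). JJ H1 g a b) x + \<beta> * (\<lambda>(a,b). JJ H2 g a b) x = (\<lambda>(a,b). JJ ?H g a b) x) (at_bot \<times>\<^sub>F at_top)"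
  proof (rule eventually_mono[OF ev_ABF[of 0 0]])
    fix x :: "real \<times> real" assume "fst x \<le> 0 \<and> 0 \<le> snd x"
    then have ab: "fst x \<le> snd x" by linarith
    have "hs_has_integral_on ?H g (\<alpha> * JJ H1 g (fst x) (snd x) + \<beta> * JJ H2 g (fst x) (snd x)) (fst x) (snd x)"
      by (rule hs_on_lin[OF JJ[OF ab H1 g] JJ[OF ab H2 g]]) (rule RS_lin_H)
    from JJ_eq[OF this] show "\<alpha> * (\<lambda>(a,b). JJ H1 g a b) x + \<beta> * (\<lambda>(a,b). JJ H2 g a b) x = (\<lambda>(a,b). JJ ?H g a b) x"
      by (simp add: case_prod_unfold)
  qed
  from tendsto_cong[THEN iffD1, OF this L]
  have "((\<lambda>(a,b). JJ ?H g a b) \<longlongrightarrow> \<alpha> * hs_integral H1 g + \<beta> * hs_integral H2 g) (at_bot \<times>\<^sub>F at_top)" .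
  then show ?thesis using tendsto_unique[OF ABF_nbot WL[OF H HB g]] by blast
qed

lemma WL_lin_g:
  assumes H: "continuous_on UNIV H" and HB: "\<And>t. \<bar>H t\<bar> \<le> C" and g1: "g1 \<in> BV" and g2: "g2 \<in> BV"
  shows "hs_integral H (\<lambda>y. \<alpha> * g1 y + \<beta> * g2 y) = \<alpha> * hs_integral H g1 + \<beta> * hs_integral H g2"
proof -
  let ?g = "\<lambda>y. \<alpha> * g1 y + \<beta> * g2 y"
  have g: "?g \<in> BV" by (rule BV_lin[OF g1 g2])
  have L: "((\<lambda>x. \<alpha> * (\<lambda>(a,b). JJ H g1 a b) x + \<beta> * (\<lambda>(a,b). JJ H g2 a b) x) \<longlongrightarrow>
      \<alpha> * hs_integral H g1 + \<beta> * hs_integral H g2) (at_bot \<times>\<^sub>F at_top)"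
    by (intro tendsto_add tendsto_mult_left WL[OF H HB g1] WL[OF H HB g2])
  have "eventually (\<lambda>x. \<alpha> * (\<lambda>(a,b). JJ H g1 a b) x + \<beta> * (\<lambda>(a,b). JJ H g2 a b) x = (\<lambda>(a,b). JJ H ?g a b) x) (at_bot \<times>\<^sub>F at_top)"
  proof (rule eventually_mono[OF ev_ABF[of 0 0]])
    fix x :: "real \<times> real" assume "fst x \<le> 0 \<and> 0 \<le> snd x"
    then have ab: "fst x \<le> snd x" by linarith
    have "hs_has_integral_on H ?g (\<alpha> * JJ H g1 (fst x) (snd x) + \<beta> * JJ H g2 (fst x) (snd x)) (fst x) (snd x)"
      by (rule hs_on_lin[OF JJ[OF ab H g1] JJ[OF ab H g2]]) (rule RS_lin_g)
    from JJ_eq[OF this] show "\<alpha> * (\<lambda>(a,b). JJ H g1 a b) x + \<beta> * (\<lambda>(a,b). JJ H g2 a b) x = (\<lambda>(a,b). JJ H ?g a b) x"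
      by (simp add: case_prod_unfold)
  qed
  from tendsto_cong[THEN iffD1, OF this L]
  have "((\<lambda>(a,b). JJ H ?g a b) \<longlongrightarrow> \<alpha> * hs_integral H g1 + \<beta> * hs_integral H g2) (at_bot \<times>\<^sub>F at_top)" .
  then show ?thesis using tendsto_unique[OF ABF_nbot WL[OF H HB g]] by blast
qed

lemma lim_top: "(f \<longlongrightarrow> L) at_top \<Longrightarrow> at_pinf f = L"
  unfolding at_pinf_def by (rule tendsto_Lim) simp_all

lemma lim_bot: "(f \<longlongrightarrow> L) at_bot \<Longrightarrow> at_minf f = L"
  unfolding at_minf_def by (rule tendsto_Lim) simp_all

lemma BV_pinf: "g \<in> BV \<Longrightarrow> (g \<longlongrightarrow> at_pinf g) at_top"
  using BV_lim(1) lim_top by metis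

lemma BV_minf: "g \<in> BV \<Longrightarrow> (g \<longlongrightarrow> at_minf g) at_bot"
  using BV_lim(2) lim_bot by metis

lemma WL_one:
  assumes g: "g \<in> BV"
  shows "hs_integral (\<lambda>_. 1) g = at_pinf g - at_minf g"
proof -
  have H: "continuous_on UNIV (\<lambda>_::real. 1::real)" by simp
  have HB: "\<And>t::real. \<bar>(\<lambda>_. 1::real) t\<bar> \<le> 1" by simp
  have JJ1: "JJ (\<lambda>_. 1) g a b = g b - g a" if ab: "a \<le> b" for a b
  proof (rule JJ_eq)
    show "hs_has_integral_on (\<lambda>_. 1) g (g b - g a) a b"
      unfolding hs_on_iff
    proof (intro allI impI exI conjI)
      show "gauge (\<lambda>x. ball x 1)" by (rule gauge_ball) simp
      fix e :: real and p assume e: "e > 0" and p: "p tagged_division_of {a..b} \<and> (\<lambda>x. ball x 1) fine p"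
      have "RS (\<lambda>_. 1) g p = g b - g a"
        unfolding RS_def using additive_tagged_division_1[OF ab, of p g] p by simp
      then show "\<bar>RS (\<lambda>_. 1) g p - (g b - g a)\<bar> < e" using e by simp
    qed
  qed
  have L: "((\<lambda>x. g (snd x) - g (fst x)) \<longlongrightarrow> at_pinf g - at_minf g) (at_bot \<times>\<^sub>F at_top)"
    by (intro tendsto_diff filterlim_compose[OF BV_pinf[OF g] filterlim_snd]
        filterlim_compose[OF BV_minf[OF g] filterlim_fst])
  have "eventually (\<lambda>x. g (snd x) - g (fst x) = (\<lambda>(a,b). JJ (\<lambda>_. 1) g a b) x) (at_bot \<times>\<^sub>F at_top)"
  proof (rule eventually_mono[OF ev_ABF[of 0 0]])
    fix x :: "real \<times> real" assume "fst x \<le> 0 \<and> 0 \<le> snd x"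
    then have ab: "fst x \<le> snd x" by linarith
    show "g (snd x) - g (fst x) = (\<lambda>(a,b). JJ (\<lambda>_. 1) g a b) x"
      using JJ1[OF ab] by (simp add: case_prod_unfold)
  qed
  from tendsto_cong[THEN iffD1, OF this L]
  have "((\<lambda>(a,b). JJ (\<lambda>_. 1) g a b) \<longlongrightarrow> at_pinf g - at_minf g) (at_bot \<times>\<^sub>F at_top)" .
  then show ?thesis using tendsto_unique[OF ABF_nbot WL[OF H HB g]] by blast
qed




lemma BC_props:
  assumes "F \<in> B_C"
  shows "continuous_on UNIV F" "(F \<longlongrightarrow> at_pinf F) at_top" "(F \<longlongrightarrow> 0) at_bot"
proof -
  from assms obtain L where "continuous_on UNIV F" "(F \<longlongrightarrow> L) at_top" "(F \<longlongrightarrow> 0) at_bot"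
    unfolding B_C_def by blast
  then show "continuous_on UNIV F" "(F \<longlongrightarrow> at_pinf F) at_top" "(F \<longlongrightarrow> 0) at_bot"
    using lim_top by auto
qed

lemma BC_bounded:
  assumes "F \<in> B_C"
  shows "\<exists>B. \<forall>t. \<bar>F t\<bar> \<le> B"
proof -
  note P = BC_props[OF assms]
  obtain M1 where M1: "\<And>t. t \<ge> M1 \<Longrightarrow> \<bar>F t - at_pinf F\<bar> < 1"
    using P(2)[THEN tendstoD, of 1] unfolding eventually_at_top_linorder dist_real_def by auto
  obtain m1 where m1: "\<And>t. t \<le> m1 \<Longrightarrow> \<bar>F t\<bar> < 1"
    using P(3)[THEN tendstoD, of 1] unfolding eventually_at_bot_linorder dist_real_def by auto
  have "compact (F ` {m1..M1})"
    by (rule compact_continuous_image[OF continuous_on_subset[OF P(1)]]) auto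
  then obtain K where K: "\<forall>x\<in>F ` {m1..M1}. \<bar>x\<bar> \<le> K"
    using compact_imp_bounded bounded_real by metis
  show ?thesis
  proof (intro exI allI)
    fix t
    show "\<bar>F t\<bar> \<le> \<bar>K\<bar> + \<bar>at_pinf F\<bar> + 1"
    proof (cases "t \<le> m1")
      case True then show ?thesis using m1[of t] by linarith
    next
      case False
      show ?thesis
      proof (cases "t \<ge> M1")
        case True then show ?thesis using M1[of t] by linarith
      next
        case False
        then have "t \<in> {m1..M1}" using \<open>\<not> t \<le> m1\<close> by auto
        then have "\<bar>F t\<bar> \<le> K" using K by blast
        then show ?thesis by linarith
      qed
    qed
  qed
qed

lemma BC_unif:
  assumes "F \<in> B_C" "\<epsilon> > 0"
  shows "\<exists>\<delta>>0. \<forall>s t. \<bar>s - t\<bar> < \<delta> \<longrightarrow> \<bar>F s - F t\<bar> \<le> \<epsilon>"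
proof -
  note P = BC_props[OF assms(1)]
  have e2: "\<epsilon>/2 > 0" using assms(2) by simp
  obtain M1 where M1: "\<And>t. t \<ge> M1 \<Longrightarrow> \<bar>F t - at_pinf F\<bar> < \<epsilon>/2"
    using P(2)[THEN tendstoD, OF e2] unfolding eventually_at_top_linorder dist_real_def by auto
  obtain m1 where m1: "\<And>t. t \<le> m1 \<Longrightarrow> \<bar>F t\<bar> < \<epsilon>/2"
    using P(3)[THEN tendstoD, OF e2] unfolding eventually_at_bot_linorder dist_real_def by auto
  have "uniformly_continuous_on {m1-1..M1+1} F"
    by (rule compact_uniformly_continuous[OF continuous_on_subset[OF P(1)]]) auto
  then obtain d where d: "d > 0" "\<forall>x\<in>{m1-1..M1+1}. \<forall>x'\<in>{m1-1..M1+1}. dist x' x < d \<longrightarrow> dist (F x') (F x) < \<epsilon>"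
    using assms(2) unfolding uniformly_continuous_on_def by blast
  show ?thesis
  proof (intro exI conjI allI impI)
    show "min d 1 > 0" using d(1) by simp
    fix s t assume st: "\<bar>s - t\<bar> < min d 1"
    show "\<bar>F s - F t\<bar> \<le> \<epsilon>"
    proof (cases "s \<in> {m1-1..M1+1} \<and> t \<in> {m1-1..M1+1}")
      case True
      then show ?thesis using d(2) st by (force simp: dist_real_def)
    next
      case False
      then have "(s \<ge> M1 \<and> t \<ge> M1) \<or> (s \<le> m1 \<and> t \<le> m1)" using st by auto
      then show ?thesis
      proof
        assume "s \<ge> M1 \<and> t \<ge> M1"
        then show ?thesis using M1[of s] M1[of t] by linarith
      next
        assume "s \<le> m1 \<and> t \<le> m1"
        then show ?thesis using m1[of s] m1[of t] by linarith
      qed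
    qed
  qed
qed

lemma BC_alex_bdd:
  assumes "F \<in> B_C"
  shows "bdd_above {\<bar>F b - F a\<bar> | a b. a \<le> b}"
proof -
  obtain B where B: "\<And>t. \<bar>F t\<bar> \<le> B" using BC_bounded[OF assms] by blast
  show ?thesis unfolding bdd_above_def
  proof (intro exI ballI)
    fix s assume "s \<in> {\<bar>F b - F a\<bar> | a b. a \<le> b}"
    then obtain a b where "s = \<bar>F b - F a\<bar>" by blast
    then show "s \<le> 2 * B" using B[of a] B[of b] by linarith
  qed
qed

lemma alex_upper:
  assumes "F \<in> B_C" "a \<le> b"
  shows "\<bar>F b - F a\<bar> \<le> alex F"
  unfolding alex_def by (rule cSup_upper[OF _ BC_alex_bdd[OF assms(1)]]) (use assms(2) in blast)

lemma alex_nonneg: "F \<in> B_C \<Longrightarrow> 0 \<le> alex F"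
  using alex_upper[of F 0 0] by simp

lemma alex_pt:
  assumes "F \<in> B_C"
  shows "\<bar>F t\<bar> \<le> alex F"
proof (rule tendsto_upperbound)
  have "((\<lambda>a. \<bar>F t - F a\<bar>) \<longlongrightarrow> \<bar>F t - 0\<bar>) at_bot"
    by (intro tendsto_intros BC_props(3)[OF assms])
  then show "((\<lambda>a. \<bar>F t - F a\<bar>) \<longlongrightarrow> \<bar>F t\<bar>) at_bot" by simp
  show "\<forall>\<^sub>F a in at_bot. \<bar>F t - F a\<bar> \<le> alex F"
    unfolding eventually_at_bot_linorder using alex_upper[OF assms] by blast
qed simp_all

lemma alex_inf:
  assumes "F \<in> B_C"
  shows "\<bar>at_pinf F\<bar> \<le> alex F"
proof (rule tendsto_upperbound)
  show "((\<lambda>t. \<bar>F t\<bar>) \<longlongrightarrow> \<bar>at_pinf F\<bar>) at_top"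
    by (intro tendsto_intros BC_props(2)[OF assms])
  show "\<forall>\<^sub>F t in at_top. \<bar>F t\<bar> \<le> alex F" using alex_pt[OF assms] by simp
qed simp

lemma shift_lim: fixes F :: "real \<Rightarrow> real" and x :: real
  shows "(F \<longlongrightarrow> L) at_bot \<Longrightarrow> ((\<lambda>y. F (x - y)) \<longlongrightarrow> L) at_top"
proof -
  assume F: "(F \<longlongrightarrow> L) at_bot"
  have "filterlim (\<lambda>y::real. x - y) at_bot at_top"
    unfolding filterlim_at_bot
  proof
    fix Z :: real
    show "\<forall>\<^sub>F y in at_top. x - y \<le> Z"
      unfolding eventually_at_top_linorder by (rule exI[of _ "x - Z"]) auto
  qed
  from filterlim_compose[OF F this] show ?thesis .
qed

lemma shift_cont: fixes F :: "real \<Rightarrow> real" and x :: real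
  shows "continuous_on UNIV F \<Longrightarrow> continuous_on UNIV (\<lambda>y. F (x - y))"
  by (rule continuous_on_compose2[of UNIV F]) (auto intro!: continuous_intros)

definition PP :: "(real \<Rightarrow> real) \<Rightarrow> (real \<Rightarrow> real) \<Rightarrow> real \<Rightarrow> real" where
  "PP F g x = hs_integral (\<lambda>y. F (x - y)) g"

lemma conv_rep:
  assumes F: "F \<in> B_C" and g: "g \<in> BV"
  shows "conv F g x = at_pinf F * at_minf g + PP F g x"
proof -
  note P = BC_props[OF F]
  obtain B where B: "\<And>t. \<bar>F t\<bar> \<le> B" using BC_bounded[OF F] by blast
  let ?Fi = "at_pinf F"
  let ?H = "\<lambda>y. ?Fi - F (x - y)"
  have Hinf: "at_pinf ?H = ?Fi"
  proof (rule lim_top)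
    have "((\<lambda>y. ?Fi - F (x - y)) \<longlongrightarrow> ?Fi - 0) at_top"
      by (intro tendsto_intros shift_lim P(3))
    then show "(?H \<longlongrightarrow> ?Fi) at_top" by simp
  qed
  have eqH: "?H = (\<lambda>y. ?Fi * (\<lambda>_. 1) y + (-1) * (\<lambda>y. F (x - y)) y)" by auto
  have "hs_integral ?H g = ?Fi * hs_integral (\<lambda>_. 1) g + (-1) * hs_integral (\<lambda>y. F (x - y)) g"
    unfolding eqH
    by (rule WL_lin_H[of "\<lambda>_. 1" 1 "\<lambda>y. F (x - y)" B g ?Fi "-1"]) (use shift_cont[OF P(1)] B g in auto)
  then have "hs_integral ?H g = ?Fi * (at_pinf g - at_minf g) - PP F g x"
    by (simp add: WL_one[OF g] PP_def)
  then show ?thesis unfolding conv_def Let_def Hinf by (simp add: algebra_simps)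
qed


lemma PP_diff:
  assumes F: "F \<in> B_C" and g: "g \<in> BV"
  shows "PP F g x - PP F g x' = hs_integral (\<lambda>y. 1 * F (x - y) + (-1) * F (x' - y)) g"
proof -
  note P = BC_props[OF F]
  obtain B where B: "\<And>t. \<bar>F t\<bar> \<le> B" using BC_bounded[OF F] by blast
  have "hs_integral (\<lambda>y. 1 * (\<lambda>y. F (x - y)) y + (-1) * (\<lambda>y. F (x' - y)) y) g
      = 1 * hs_integral (\<lambda>y. F (x - y)) g + (-1) * hs_integral (\<lambda>y. F (x' - y)) g"
    by (rule WL_lin_H[of _ B _ B]) (use shift_cont[OF P(1)] B g in auto)
  then show ?thesis by (simp add: PP_def)
qed

lemma PP_ucont:
  assumes F: "F \<in> B_C" and g: "g \<in> BV"
  shows "uniformly_continuous_on UNIV (PP F g)"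
  unfolding uniformly_continuous_on_def
proof (intro allI impI)
  fix e :: real assume e: "e > 0"
  note P = BC_props[OF F]
  define V where "V = variation g"
  have V0: "V \<ge> 0" unfolding V_def by (rule variation_nonneg[OF g])
  define \<epsilon> where "\<epsilon> = e / (2 * (V + 1))"
  have e1: "\<epsilon> > 0" using e V0 by (simp add: \<epsilon>_def)
  have e2: "\<epsilon> * V < e"
  proof -
    have "\<epsilon> * (2 * (V + 1)) = e" using V0 by (simp add: \<epsilon>_def)
    moreover have "\<epsilon> * V < \<epsilon> * (2 * (V + 1))" using e1 V0 by (intro mult_strict_left_mono) auto
    ultimately show ?thesis by linarith
  qed
  obtain \<delta> where d: "\<delta> > 0" "\<forall>s t. \<bar>s - t\<bar> < \<delta> \<longrightarrow> \<bar>F s - F t\<bar> \<le> \<epsilon>" using BC_unif[OF F e1] by blast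
  show "\<exists>d>0. \<forall>x\<in>UNIV. \<forall>x'\<in>UNIV. dist x' x < d \<longrightarrow> dist (PP F g x') (PP F g x) < e"
  proof (intro exI conjI ballI impI)
    show "\<delta> > 0" by (rule d(1))
    fix x x' :: real assume "dist x' x < \<delta>"
    then have xx: "\<bar>x' - x\<bar> < \<delta>" by (simp add: dist_real_def)
    have cH: "continuous_on UNIV (\<lambda>y. 1 * F (x' - y) + (-1) * F (x - y))"
      using shift_cont[OF P(1), of x'] shift_cont[OF P(1), of x] by (intro continuous_intros) auto
    have bH: "\<bar>1 * F (x' - y) + (-1) * F (x - y)\<bar> \<le> \<epsilon>" for y
    proof -
      have "\<bar>(x' - y) - (x - y)\<bar> < \<delta>" using xx by simp
      then show ?thesis using d(2) by simp
    qed
    have "\<bar>PP F g x' - PP F g x\<bar> \<le> \<epsilon> * variation g"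
      unfolding PP_diff[OF F g] by (rule WL_bound[OF cH bH g])
    then show "dist (PP F g x') (PP F g x) < e" using e2 by (simp add: dist_real_def V_def)
  qed
qed

lemma conv_eq:
  assumes F: "F \<in> B_C" and g: "g \<in> BV"
  shows "conv F g = (\<lambda>x. at_pinf F * at_minf g + PP F g x)"
  using conv_rep[OF F g] by auto

lemma conv_cont:
  assumes F: "F \<in> B_C" and g: "g \<in> BV"
  shows "continuous_on UNIV (conv F g)"
  unfolding conv_eq[OF F g]
  by (intro continuous_intros uniformly_continuous_imp_continuous[OF PP_ucont[OF F g]])

lemma PP_top:
  assumes F: "F \<in> B_C" and g: "g \<in> BV"
  shows "(PP F g \<longlongrightarrow> at_pinf F * (at_pinf g - at_minf g)) at_top"
proof (rule tendstoI)
  fix e :: real assume e: "e > 0"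
  note P = BC_props[OF F]
  let ?Fi = "at_pinf F"
  obtain B where B: "\<And>t. \<bar>F t\<bar> \<le> B" using BC_bounded[OF F] by blast
  define B' where "B' = B + \<bar>?Fi\<bar>"
  have B'0: "0 \<le> B'" using B[of 0] by (simp add: B'_def)
  define V where "V = variation g"
  have V0: "V \<ge> 0" unfolding V_def by (rule variation_nonneg[OF g])
  define \<epsilon> where "\<epsilon> = e / (2 * (V + B' + 1))"
  have e1: "\<epsilon> > 0" using e V0 B'0 by (simp add: \<epsilon>_def)
  have e2: "\<epsilon> * V + B' * \<epsilon> < e"
  proof -
    have "\<epsilon> * (2 * (V + B' + 1)) = e" using V0 B'0 by (simp add: \<epsilon>_def)
    moreover have "\<epsilon> * (V + B') < \<epsilon> * (2 * (V + B' + 1))" using e1 V0 B'0 by (intro mult_strict_left_mono) auto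
    ultimately show ?thesis by (simp add: algebra_simps)
  qed
  obtain m M where mM: "m \<le> M"
    "\<And>(S::(real \<times> real set) set) x y. dfam S x y \<Longrightarrow> (\<forall>i\<in>S. y i \<le> m \<or> M \<le> x i) \<Longrightarrow>
        (\<Sum>i\<in>S. \<bar>g (y i) - g (x i)\<bar>) \<le> \<epsilon>"
    using BV_tail[OF g e1] by blast
  obtain Mf where Mf: "\<And>t. t \<ge> Mf \<Longrightarrow> \<bar>F t - ?Fi\<bar> < \<epsilon>"
    using P(2)[THEN tendstoD, OF e1] unfolding eventually_at_top_linorder dist_real_def by auto
  show "\<forall>\<^sub>F x in at_top. dist (PP F g x) (?Fi * (at_pinf g - at_minf g)) < e"
    unfolding eventually_at_top_linorder
  proof (intro exI allI impI)
    fix x assume x: "Mf + M + 1 \<le> x"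
    let ?K = "\<lambda>y. 1 * F (x - y) + (- ?Fi) * (\<lambda>_. 1) y"
    have cK: "continuous_on UNIV ?K" using shift_cont[OF P(1), of x] by (intro continuous_intros) auto
    have eqK: "hs_integral ?K g = 1 * hs_integral (\<lambda>y. F (x - y)) g + (- ?Fi) * hs_integral (\<lambda>_. 1) g"
      by (rule WL_lin_H[of _ B _ 1]) (use shift_cont[OF P(1)] B g in auto)
    have "\<bar>hs_integral ?K g\<bar> \<le> \<epsilon> * variation g + B' * \<epsilon>"
    proof (rule WL_bound_split[OF cK g, of 1 B' m M \<epsilon> \<epsilon>])
      show "\<bar>?K t\<bar> \<le> B'" for t
      proof -
        have "\<bar>?K t\<bar> \<le> \<bar>F (x - t)\<bar> + \<bar>?Fi\<bar>" by simp
        then show ?thesis using B[of "x - t"] by (simp add: B'_def)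
      qed
      show "\<bar>?K t\<bar> \<le> \<epsilon>" if "m - 1 \<le> t" "t \<le> M + 1" for t
        using Mf[of "x - t"] that x by simp
    qed (use e1 mM(2) in auto)
    then have "\<bar>PP F g x - ?Fi * (at_pinf g - at_minf g)\<bar> \<le> \<epsilon> * V + B' * \<epsilon>"
      using eqK WL_one[OF g] by (simp add: PP_def V_def)
    then show "dist (PP F g x) (?Fi * (at_pinf g - at_minf g)) < e"
      using e2 by (simp add: dist_real_def)
  qed
qed

lemma PP_bot:
  assumes F: "F \<in> B_C" and g: "g \<in> BV"
  shows "(PP F g \<longlongrightarrow> 0) at_bot"
proof (rule tendstoI)
  fix e :: real assume e: "e > 0"
  note P = BC_props[OF F]
  obtain B where B: "\<And>t. \<bar>F t\<bar> \<le> B" using BC_bounded[OF F] by blast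
  have B0: "0 \<le> B" using B[of 0] by linarith
  define V where "V = variation g"
  have V0: "V \<ge> 0" unfolding V_def by (rule variation_nonneg[OF g])
  define \<epsilon> where "\<epsilon> = e / (2 * (V + B + 1))"
  have e1: "\<epsilon> > 0" using e V0 B0 by (simp add: \<epsilon>_def)
  have e2: "\<epsilon> * V + B * \<epsilon> < e"
  proof -
    have "\<epsilon> * (2 * (V + B + 1)) = e" using V0 B0 by (simp add: \<epsilon>_def)
    moreover have "\<epsilon> * (V + B) < \<epsilon> * (2 * (V + B + 1))" using e1 V0 B0 by (intro mult_strict_left_mono) auto
    ultimately show ?thesis by (simp add: algebra_simps)
  qed
  obtain m M where mM: "m \<le> M"
    "\<And>(S::(real \<times> real set) set) x y. dfam S x y \<Longrightarrow> (\<forall>i\<in>S. y i \<le> m \<or> M \<le> x i) \<Longrightarrow>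
        (\<Sum>i\<in>S. \<bar>g (y i) - g (x i)\<bar>) \<le> \<epsilon>"
    using BV_tail[OF g e1] by blast
  obtain mf where mf: "\<And>t. t \<le> mf \<Longrightarrow> \<bar>F t\<bar> < \<epsilon>"
    using P(3)[THEN tendstoD, OF e1] unfolding eventually_at_bot_linorder dist_real_def by auto
  show "\<forall>\<^sub>F x in at_bot. dist (PP F g x) 0 < e"
    unfolding eventually_at_bot_linorder
  proof (intro exI allI impI)
    fix x assume x: "x \<le> mf + m - 1"
    have cK: "continuous_on UNIV (\<lambda>y. F (x - y))" by (rule shift_cont[OF P(1)])
    have "\<bar>hs_integral (\<lambda>y. F (x - y)) g\<bar> \<le> \<epsilon> * variation g + B * \<epsilon>"
    proof (rule WL_bound_split[OF cK g, of 1 B m M \<epsilon> \<epsilon>])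
      show "\<bar>F (x - t)\<bar> \<le> B" for t by (rule B)
      show "\<bar>F (x - t)\<bar> \<le> \<epsilon>" if "m - 1 \<le> t" "t \<le> M + 1" for t
        using mf[of "x - t"] that x by simp
    qed (use e1 mM(2) in auto)
    then show "dist (PP F g x) 0 < e" using e2 by (simp add: dist_real_def PP_def V_def)
  qed
qed

lemma conv_C0bar:
  assumes F: "F \<in> B_C" and g: "g \<in> BV"
  shows "conv F g \<in> C0bar"
proof -
  have "(conv F g \<longlongrightarrow> at_pinf F * at_minf g + at_pinf F * (at_pinf g - at_minf g)) at_top"
    unfolding conv_eq[OF F g] by (intro tendsto_intros PP_top[OF F g])
  moreover have "(conv F g \<longlongrightarrow> at_pinf F * at_minf g + 0) at_bot"
    unfolding conv_eq[OF F g] by (intro tendsto_intros PP_bot[OF F g])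
  ultimately show ?thesis unfolding C0bar_def using conv_cont[OF F g] by blast
qed




lemma var_sums_const: "var_sums (\<lambda>_. c) = {0}"
proof
  show "var_sums (\<lambda>_. c) \<subseteq> {0}" unfolding var_sums_def by auto
  show "{0} \<subseteq> var_sums (\<lambda>_. c)" using var_sums_0 by auto
qed

lemma const_BV: "(\<lambda>_. c) \<in> BV"
  by (simp add: BV_def var_sums_const)

lemma const_variation: "variation (\<lambda>_. c) = 0"
  unfolding variation_def var_sums_const by simp

lemma const_minf: "at_minf (\<lambda>_. c) = c"
  by (rule lim_bot) simp

lemma const_bvnorm: "bvnorm (\<lambda>_. c) = \<bar>c\<bar>"
  unfolding bvnorm_def const_minf const_variation by simp

lemma supnorm_le: "(\<And>x. \<bar>h x\<bar> \<le> c) \<Longrightarrow> supnorm h \<le> c"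
  unfolding supnorm_def by (rule cSup_least) auto

lemma supnorm_const: "supnorm (\<lambda>_. c) = \<bar>c\<bar>"
  unfolding supnorm_def by simp

lemma BC_lin:
  assumes F: "F \<in> B_C" and G: "G \<in> B_C"
  shows "(\<lambda>y. a * F y + b * G y) \<in> B_C"
    "at_pinf (\<lambda>y. a * F y + b * G y) = a * at_pinf F + b * at_pinf G"
proof -
  note PF = BC_props[OF F] and PG = BC_props[OF G]
  have t: "((\<lambda>y. a * F y + b * G y) \<longlongrightarrow> a * at_pinf F + b * at_pinf G) at_top"
    by (intro tendsto_intros PF(2) PG(2))
  have "((\<lambda>y. a * F y + b * G y) \<longlongrightarrow> a * 0 + b * 0) at_bot"
    by (intro tendsto_intros PF(3) PG(3))
  then have u: "((\<lambda>y. a * F y + b * G y) \<longlongrightarrow> 0) at_bot" by simp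
  have c: "continuous_on UNIV (\<lambda>y. a * F y + b * G y)" using PF(1) PG(1) by (intro continuous_intros)
  show "(\<lambda>y. a * F y + b * G y) \<in> B_C" unfolding B_C_def using t u c by blast
  show "at_pinf (\<lambda>y. a * F y + b * G y) = a * at_pinf F + b * at_pinf G" using lim_top[OF t] .
qed

lemma conv_bound:
  assumes F: "F \<in> B_C" and g: "g \<in> BV"
  shows "\<bar>conv F g x\<bar> \<le> alex F * bvnorm g"
proof -
  note P = BC_props[OF F]
  have "\<bar>PP F g x\<bar> \<le> alex F * variation g"
    unfolding PP_def by (rule WL_bound[OF shift_cont[OF P(1)] alex_pt[OF F] g])
  moreover have "\<bar>at_pinf F * at_minf g\<bar> \<le> alex F * \<bar>at_minf g\<bar>"
    unfolding abs_mult by (rule mult_right_mono[OF alex_inf[OF F]]) simp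
  ultimately show ?thesis
    unfolding conv_rep[OF F g] bvnorm_def by (simp add: algebra_simps)
qed

lemma supnorm_conv: "F \<in> B_C \<Longrightarrow> g \<in> BV \<Longrightarrow> supnorm (conv F g) \<le> alex F * bvnorm g"
  by (rule supnorm_le) (rule conv_bound)

lemma minf_lin:
  assumes g: "g \<in> BV" and h: "h \<in> BV"
  shows "at_minf (\<lambda>y. a * g y + b * h y) = a * at_minf g + b * at_minf h"
  by (rule lim_bot) (intro tendsto_intros BV_minf g h)

lemma conv_lin_g:
  assumes F: "F \<in> B_C" and g: "g \<in> BV" and h: "h \<in> BV"
  shows "conv F (\<lambda>y. a * g y + b * h y) = (\<lambda>x. a * conv F g x + b * conv F h x)"
proof
  fix x
  note P = BC_props[OF F]
  obtain B where B: "\<And>t. \<bar>F t\<bar> \<le> B" using BC_bounded[OF F] by blast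
  have gh: "(\<lambda>y. a * g y + b * h y) \<in> BV" by (rule BV_lin[OF g h])
  have "PP F (\<lambda>y. a * g y + b * h y) x = a * PP F g x + b * PP F h x"
    unfolding PP_def by (rule WL_lin_g[OF shift_cont[OF P(1)] _ g h]) (rule B)
  then show "conv F (\<lambda>y. a * g y + b * h y) x = a * conv F g x + b * conv F h x"
    unfolding conv_rep[OF F gh] conv_rep[OF F g] conv_rep[OF F h] minf_lin[OF g h]
    by (simp add: algebra_simps)
qed

lemma conv_lin_F:
  assumes F: "F \<in> B_C" and G: "G \<in> B_C" and g: "g \<in> BV"
  shows "conv (\<lambda>y. a * F y + b * G y) g = (\<lambda>x. a * conv F g x + b * conv G g x)"
proof
  fix x
  note PF = BC_props[OF F] and PG = BC_props[OF G]
  obtain B1 where B1: "\<And>t. \<bar>F t\<bar> \<le> B1" using BC_bounded[OF F] by blast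
  obtain B2 where B2: "\<And>t. \<bar>G t\<bar> \<le> B2" using BC_bounded[OF G] by blast
  note FG = BC_lin[OF F G, of a b]
  have "hs_integral (\<lambda>y. a * (\<lambda>y. F (x - y)) y + b * (\<lambda>y. G (x - y)) y) g
       = a * hs_integral (\<lambda>y. F (x - y)) g + b * hs_integral (\<lambda>y. G (x - y)) g"
    by (rule WL_lin_H[OF shift_cont[OF PF(1)] _ shift_cont[OF PG(1)] _ g]) (rule B1, rule B2)
  then have "PP (\<lambda>y. a * F y + b * G y) g x = a * PP F g x + b * PP G g x"
    by (simp add: PP_def)
  then show "conv (\<lambda>y. a * F y + b * G y) g x = a * conv F g x + b * conv G g x"
    unfolding conv_rep[OF FG(1) g] conv_rep[OF F g] conv_rep[OF G g] FG(2)
    by (simp add: algebra_simps)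
qed

lemma zero_BC: "(\<lambda>_. 0) \<in> B_C"
  unfolding B_C_def by auto

lemma alex_zero: "alex (\<lambda>_. 0) = 0"
proof -
  have "{\<bar>(\<lambda>_::real. 0::real) b - (\<lambda>_. 0) a\<bar> | a b. a \<le> b} = {0}" by auto
  then show ?thesis unfolding alex_def by simp
qed

definition F0 :: "real \<Rightarrow> real" where "F0 x = max 0 (min 1 x)"

lemma F0_BC: "F0 \<in> B_C"
proof -
  have c: "continuous_on UNIV F0" unfolding F0_def by (intro continuous_intros)
  have t: "(F0 \<longlongrightarrow> 1) at_top"
  proof (rule tendsto_eventually)
    show "\<forall>\<^sub>F x in at_top. F0 x = 1" unfolding eventually_at_top_linorder F0_def
      by (rule exI[of _ 1]) auto
  qed
  have b: "(F0 \<longlongrightarrow> 0) at_bot"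
  proof (rule tendsto_eventually)
    show "\<forall>\<^sub>F x in at_bot. F0 x = 0" unfolding eventually_at_bot_linorder F0_def
      by (rule exI[of _ 0]) auto
  qed
  show ?thesis unfolding B_C_def using c t b by blast
qed

lemma F0_inf: "at_pinf F0 = 1"
proof (rule lim_top, rule tendsto_eventually)
  show "\<forall>\<^sub>F x in at_top. F0 x = 1" unfolding eventually_at_top_linorder F0_def
    by (rule exI[of _ 1]) auto
qed

lemma F0_alex: "alex F0 = 1"
proof (rule antisym)
  show "alex F0 \<le> 1" unfolding alex_def
  proof (rule cSup_least)
    show "{\<bar>F0 b - F0 a\<bar> | a b. a \<le> b} \<noteq> {}" by blast
    fix s assume "s \<in> {\<bar>F0 b - F0 a\<bar> | a b. a \<le> b}"
    then obtain a b where "s = \<bar>F0 b - F0 a\<bar>" by blast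
    then show "s \<le> 1" unfolding F0_def by (simp add: abs_le_iff max_def min_def)
  qed
  have "\<bar>F0 1 - F0 0\<bar> \<le> alex F0" by (rule alex_upper[OF F0_BC]) simp
  then show "1 \<le> alex F0" by (simp add: F0_def)
qed

lemma conv_const:
  assumes F: "F \<in> B_C"
  shows "conv F (\<lambda>_. c) = (\<lambda>_. at_pinf F * c)"
proof
  fix x
  note P = BC_props[OF F]
  obtain B where B: "\<And>t. \<bar>F t\<bar> \<le> B" using BC_bounded[OF F] by blast
  have "\<bar>PP F (\<lambda>_. c) x\<bar> \<le> B * variation (\<lambda>_. c)"
    unfolding PP_def by (rule WL_bound[OF shift_cont[OF P(1)] B const_BV])
  then have "PP F (\<lambda>_. c) x = 0" by (simp add: const_variation)
  then show "conv F (\<lambda>_. c) x = at_pinf F * c"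
    unfolding conv_rep[OF F const_BV] const_minf by simp
qed


lemma Phi_bdd:
  assumes F: "F \<in> B_C"
  shows "bdd_above {supnorm (conv F g) | g. g \<in> BV \<and> bvnorm g \<le> 1}"
    "opnorm_Phi F \<le> alex F"
proof -
  have le: "s \<le> alex F" if sin: "s \<in> {supnorm (conv F g) | g. g \<in> BV \<and> bvnorm g \<le> 1}" for s
  proof -
    obtain g where g: "s = supnorm (conv F g)" "g \<in> BV" "bvnorm g \<le> 1" using sin by blast
    have "s \<le> alex F * bvnorm g" using supnorm_conv[OF F g(2)] g(1) by simp
    also have "\<dots> \<le> alex F * 1" by (rule mult_left_mono[OF g(3) alex_nonneg[OF F]])
    finally show ?thesis by simp
  qed
  then show "bdd_above {supnorm (conv F g) | g. g \<in> BV \<and> bvnorm g \<le> 1}"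
    unfolding bdd_above_def by blast
  have ne: "{supnorm (conv F g) | g. g \<in> BV \<and> bvnorm g \<le> 1} \<noteq> {}"
    using const_BV[of 0] const_bvnorm[of 0] by fastforce
  show "opnorm_Phi F \<le> alex F"
    unfolding opnorm_Phi_def by (rule cSup_least[OF ne]) (rule le)
qed

lemma Psi_bdd:
  assumes g: "g \<in> BV"
  shows "bdd_above {supnorm (conv F g) | F. F \<in> B_C \<and> alex F \<le> 1}"
    "opnorm_Psi g \<le> bvnorm g"
proof -
  have bv0: "0 \<le> bvnorm g" unfolding bvnorm_def using variation_nonneg[OF g] by simp
  have le: "s \<le> bvnorm g" if sin: "s \<in> {supnorm (conv F g) | F. F \<in> B_C \<and> alex F \<le> 1}" for s
  proof -
    obtain F where F: "s = supnorm (conv F g)" "F \<in> B_C" "alex F \<le> 1" using sin by blast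
    have "s \<le> alex F * bvnorm g" using supnorm_conv[OF F(2) g] F(1) by simp
    also have "\<dots> \<le> 1 * bvnorm g" by (rule mult_right_mono[OF F(3) bv0])
    finally show ?thesis by simp
  qed
  then show "bdd_above {supnorm (conv F g) | F. F \<in> B_C \<and> alex F \<le> 1}"
    unfolding bdd_above_def by blast
  have ne: "{supnorm (conv F g) | F. F \<in> B_C \<and> alex F \<le> 1} \<noteq> {}"
    using zero_BC alex_zero by fastforce
  show "opnorm_Psi g \<le> bvnorm g"
    unfolding opnorm_Psi_def by (rule cSup_least[OF ne]) (rule le)
qed

theorem theorem2p1:
  shows
  "(\<forall>F\<in>B_C.
      (\<forall>g\<in>BV. conv F g \<in> C0bar) \<and>
      (\<forall>g\<in>BV. \<forall>h\<in>BV. \<forall>a b::real.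
          conv F (\<lambda>y. a * g y + b * h y) = (\<lambda>x. a * conv F g x + b * conv F h x)) \<and>
      (\<forall>g\<in>BV. supnorm (conv F g) \<le> alex F * bvnorm g) \<and>
      opnorm_Phi F \<le> alex F)
   \<and> (\<exists>F\<in>B_C. F \<noteq> (\<lambda>_. 0) \<and> opnorm_Phi F = alex F)
   \<and> (\<forall>g\<in>BV.
      (\<forall>F\<in>B_C. conv F g \<in> C0bar) \<and>
      (\<forall>F\<in>B_C. \<forall>G\<in>B_C. \<forall>a b::real.
          conv (\<lambda>y. a * F y + b * G y) g = (\<lambda>x. a * conv F g x + b * conv G g x)) \<and>
      (\<forall>F\<in>B_C. supnorm (conv F g) \<le> alex F * bvnorm g) \<and>
      opnorm_Psi g \<le> bvnorm g)
   \<and> (\<exists>g\<in>BV. g \<noteq> (\<lambda>_. 0) \<and> opnorm_Psi g = bvnorm g)"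
proof (intro conjI)
  show "\<forall>F\<in>B_C.
      (\<forall>g\<in>BV. conv F g \<in> C0bar) \<and>
      (\<forall>g\<in>BV. \<forall>h\<in>BV. \<forall>a b::real.
          conv F (\<lambda>y. a * g y + b * h y) = (\<lambda>x. a * conv F g x + b * conv F h x)) \<and>
      (\<forall>g\<in>BV. supnorm (conv F g) \<le> alex F * bvnorm g) \<and>
      opnorm_Phi F \<le> alex F"
    using conv_C0bar conv_lin_g supnorm_conv Phi_bdd(2) by blast
  show "\<forall>g\<in>BV.
      (\<forall>F\<in>B_C. conv F g \<in> C0bar) \<and>
      (\<forall>F\<in>B_C. \<forall>G\<in>B_C. \<forall>a b::real.
          conv (\<lambda>y. a * F y + b * G y) g = (\<lambda>x. a * conv F g x + b * conv G g x)) \<and>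
      (\<forall>F\<in>B_C. supnorm (conv F g) \<le> alex F * bvnorm g) \<and>
      opnorm_Psi g \<le> bvnorm g"
    using conv_C0bar conv_lin_F supnorm_conv Psi_bdd(2) by blast
  have sn1: "supnorm (conv F0 (\<lambda>_. 1)) = 1"
    unfolding conv_const[OF F0_BC] F0_inf supnorm_const by simp
  show "\<exists>F\<in>B_C. F \<noteq> (\<lambda>_. 0) \<and> opnorm_Phi F = alex F"
  proof (intro bexI conjI)
    show "F0 \<noteq> (\<lambda>_. 0)" by (metis F0_def max.absorb2 min.idem zero_neq_one zero_le_one)
    have "1 \<le> opnorm_Phi F0"
      unfolding opnorm_Phi_def
    proof (rule cSup_upper[OF _ Phi_bdd(1)[OF F0_BC]])
      show "1 \<in> {supnorm (conv F0 g) | g. g \<in> BV \<and> bvnorm g \<le> 1}"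
        using sn1 const_BV[of 1] const_bvnorm[of 1] by fastforce
    qed
    then show "opnorm_Phi F0 = alex F0" using Phi_bdd(2)[OF F0_BC] F0_alex by simp
  qed (rule F0_BC)
  show "\<exists>g\<in>BV. g \<noteq> (\<lambda>_. 0) \<and> opnorm_Psi g = bvnorm g"
  proof (intro bexI conjI)
    show "(\<lambda>_::real. 1::real) \<noteq> (\<lambda>_. 0)" by (metis zero_neq_one)
    have "1 \<le> opnorm_Psi (\<lambda>_. 1)"
      unfolding opnorm_Psi_def
    proof (rule cSup_upper[OF _ Psi_bdd(1)[OF const_BV]])
      show "1 \<in> {supnorm (conv F (\<lambda>_. 1)) | F. F \<in> B_C \<and> alex F \<le> 1}"
        using sn1 F0_BC F0_alex by fastforce
    qed
    then show "opnorm_Psi (\<lambda>_. 1) = bvnorm (\<lambda>_. 1)"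
      using Psi_bdd(2)[OF const_BV, of 1] const_bvnorm[of 1] by simp
  qed (rule const_BV)
qed



end
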